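(* The size $z_{SSsr}$ of the self-referencing LZSS factorization satisfies (the alphabet being allowed to contain as many distinct characters as needed): substitutions: $\liminf_{n\to\infty}\mathsf{MS}_{\mathrm{sub}}(z_{SSsr},n)\ge 3$, $\mathsf{AS}_{\mathrm{sub}}(z_{SSsr},n)\ge 2z_{SSsr}-\Theta(\sqrt{z_{SSsr}})$ and $\mathsf{AS}_{\mathrm{sub}}(z_{SSsr},n)=\Omega(\sqrt n)$; insertions: $\liminf_{n\to\infty}\mathsf{MS}_{\mathrm{ins}}(z_{SSsr},n)\ge 2$, $\mathsf{AS}_{\mathrm{ins}}(z_{SSsr},n)\ge z_{SSsr}-\Theta(\sqrt{z_{SSsr}})$ and $\mathsf{AS}_{\mathrm{ins}}(z_{SSsr},n)=\Omega(\sqrt n)$; deletions: $\liminf_{n\to\infty}\mathsf{MS}_{\mathrm{del}}(z_{SSsr},n)\ge 3$, $\mathsf{AS}_{\mathrm{del}}(z_{SSsr},n)\ge 2z_{SSsr}-\Theta(\sqrt{z_{SSsr}})$ and $\mathsf{AS}_{\mathrm{del}}(z_{SSsr},n)=\Omega(\sqrt n)$.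
   Context: $\mathsf{ed}$ is the edit distance. $\mathsf{MS}_{\mathrm{sub}}(C,n)=\max_{T\in\Sigma^n}\{C(T')/C(T): T'\in\Sigma^n,\ \mathsf{ed}(T,T')=1\}$, with $\mathsf{MS}_{\mathrm{ins}},\mathsf{MS}_{\mathrm{del}}$ analogous for $T'$ of length $n+1$, resp. $n-1$, and $\mathsf{AS}_\ast$ analogous with $C(T')-C(T)$. Bounds in terms of $z_{SSsr}$ refer to $z_{SSsr}(T)$ of the original string and assert existence of strings $T$ (with $z_{SSsr}(T)$ arbitrarily large) and edited $T'$ achieving them. The self-referencing LZSS factorization of $T$ is $T=f_1\cdots f_z$ where each $f_i$ is either the first occurrence in $T$ of a character, or the longest prefix of $f_i\cdots f_z$ that occurs at least twice in $f_1\cdots f_i$ (occurrences may overlap); $z_{SSsr}(T)=z$. *)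

theory Defs
  imports Complex_Main "HOL-Library.Liminf_Limsup" "HOL-Library.Extended_Real" "HOL-Library.Landau_Symbols"
begin

fun ed :: "'a list \<Rightarrow> 'a list \<Rightarrow> nat" where
  "ed [] ys = length ys"
| "ed xs [] = length xs"
| "ed (x # xs) (y # ys) =
     min (min (ed xs (y # ys) + 1) (ed (x # xs) ys + 1))
         (ed xs ys + (if x = y then 0 else 1))"

text \<open>Length of the factor starting at position i (0-based): if T!i is the first occurrence
  of its character, the factor is that single character; otherwise it is the longest prefix of
  T[i..] that also occurs starting at some earlier position j < i (overlaps allowed).\<close>

definition lz_len :: "'a list \<Rightarrow> nat \<Rightarrow> nat" where
  "lz_len T i =
     (if T ! i \<notin> set (take i T) then 1
      else (GREATEST l. l \<le> length T - i \<and>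
                         (\<exists>j<i. take l (drop j T) = take l (drop i T))))"

lemma lz_len_pos:
  assumes "i < length T"
  shows "1 \<le> lz_len T i"
proof (cases "T ! i \<in> set (take i T)")
  case False
  then show ?thesis by (simp add: lz_len_def)
next
  case True
  then obtain j where j: "j < length (take i T)" "take i T ! j = T ! i"
    by (metis in_set_conv_nth)
  then have ji: "j < i" and eq: "T ! j = T ! i" by auto
  have P1: "1 \<le> length T - i \<and> (\<exists>j<i. take 1 (drop j T) = take 1 (drop i T))"
    using assms ji eq
    by (auto intro!: exI[of _ j] simp: take_Suc_conv_app_nth)
  have "1 \<le> (GREATEST l. l \<le> length T - i \<and>
                         (\<exists>j<i. take l (drop j T) = take l (drop i T)))"
    by (rule Greatest_le_nat[where b = "length T - i"]) (use P1 in auto)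
  then show ?thesis using True by (simp add: lz_len_def)
qed

function zfrom :: "'a list \<Rightarrow> nat \<Rightarrow> nat" where
  "zfrom T i = (if length T \<le> i then 0 else Suc (zfrom T (i + lz_len T i)))"
  by pat_completeness auto
termination
proof (relation "measure (\<lambda>(T, i). length T - i)")
  show "wf (measure (\<lambda>(T, i). length T - i))" by simp
next
  fix T :: "'a list" and i
  assume "\<not> length T \<le> i"
  then have "1 \<le> lz_len T i" using lz_len_pos[of i T] by linarith
  with \<open>\<not> length T \<le> i\<close> show "((T, i + lz_len T i), T, i) \<in> measure (\<lambda>(T, i). length T - i)"
    by simp
qed

definition z_SSsr :: "'a list \<Rightarrow> nat" where
  "z_SSsr T = zfrom T 0"

definition MS_sub :: "('a list \<Rightarrow> nat) \<Rightarrow> nat \<Rightarrow> real" where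
  "MS_sub C n = Sup {real (C T') / real (C T) | T T'.
      length T = n \<and> length T' = n \<and> ed T T' = 1}"

definition MS_ins :: "('a list \<Rightarrow> nat) \<Rightarrow> nat \<Rightarrow> real" where
  "MS_ins C n = Sup {real (C T') / real (C T) | T T'.
      length T = n \<and> length T' = n + 1 \<and> ed T T' = 1}"

definition MS_del :: "('a list \<Rightarrow> nat) \<Rightarrow> nat \<Rightarrow> real" where
  "MS_del C n = Sup {real (C T') / real (C T) | T T'.
      length T = n \<and> length T' + 1 = n \<and> ed T T' = 1}"

definition AS_sub :: "('a list \<Rightarrow> nat) \<Rightarrow> nat \<Rightarrow> real" where
  "AS_sub C n = Sup {real (C T') - real (C T) | T T'.
      length T = n \<and> length T' = n \<and> ed T T' = 1}"

definition AS_ins :: "('a list \<Rightarrow> nat) \<Rightarrow> nat \<Rightarrow> real" where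
  "AS_ins C n = Sup {real (C T') - real (C T) | T T'.
      length T = n \<and> length T' = n + 1 \<and> ed T T' = 1}"

definition AS_del :: "('a list \<Rightarrow> nat) \<Rightarrow> nat \<Rightarrow> real" where
  "AS_del C n = Sup {real (C T') - real (C T) | T T'.
      length T = n \<and> length T' + 1 = n \<and> ed T T' = 1}"

end

theory Submission
  imports Defs "HOL-Library.Sublist"
begin

definition novel :: "'a list \<Rightarrow> nat \<Rightarrow> nat \<Rightarrow> bool" where
  "novel T a l \<longleftrightarrow> (\<forall>j<a. take l (drop j T) \<noteq> take l (drop a T))"

lemma take_drop_take_le:
  assumes "d + e \<le> L"
  shows "take e (drop d (take L xs)) = take e (drop d xs)"
  using assms by (simp add: drop_take take_take min_def)

lemma lz_len_copy:
  assumes "i < length T" "T ! i \<in> set (take i T)"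
  shows "\<exists>j<i. take (lz_len T i) (drop j T) = take (lz_len T i) (drop i T)"
proof -
  let ?P = "\<lambda>l. l \<le> length T - i \<and> (\<exists>j<i. take l (drop j T) = take l (drop i T))"
  have P0: "?P 0" using assms(2) by (auto simp: in_set_conv_nth)
  have "?P (GREATEST l. ?P l)"
    by (rule GreatestI_nat[where k = 0 and b = "length T - i"]) (use P0 in auto)
  then show ?thesis using assms(2) by (simp add: lz_len_def)
qed

lemma not_novel_inside:
  assumes "i < length T" "i \<le> a" "a < b" "b < i + lz_len T i"
  shows "\<not> novel T a (Suc b - a)"
proof (cases "T ! i \<in> set (take i T)")
  case False
  then have "lz_len T i = 1" by (simp add: lz_len_def)
  then show ?thesis using assms by simp
next
  case True
  obtain j where j: "j < i" "take (lz_len T i) (drop j T) = take (lz_len T i) (drop i T)"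
    using lz_len_copy[OF assms(1) True] by blast
  define d where "d = a - i"
  define e where "e = Suc b - a"
  have de: "d + e \<le> lz_len T i" using assms by (simp add: d_def e_def)
  have "take e (drop (j + d) T) = take e (drop d (drop j T))" by (simp add: add.commute)
  also have "\<dots> = take e (drop d (take (lz_len T i) (drop j T)))"
    by (rule take_drop_take_le[OF de, symmetric])
  also have "\<dots> = take e (drop d (take (lz_len T i) (drop i T)))" using j by simp
  also have "\<dots> = take e (drop d (drop i T))" by (rule take_drop_take_le[OF de])
  also have "\<dots> = take e (drop a T)" using assms by (simp add: d_def add.commute)
  finally have "take e (drop (j + d) T) = take e (drop a T)" .
  moreover have "j + d < a" using j assms by (simp add: d_def)
  ultimately show ?thesis unfolding novel_def e_def by blast
qed

fun wchain :: "'a list \<Rightarrow> (nat \<times> nat) list \<Rightarrow> bool" where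
  "wchain T [] = True"
| "wchain T (w # ws) = (fst w < snd w \<and> snd w < length T \<and> novel T (fst w) (Suc (snd w) - fst w)
      \<and> (case ws of [] \<Rightarrow> True | w' # _ \<Rightarrow> snd w \<le> fst w') \<and> wchain T ws)"

lemma zfrom_unfold: "i < length T \<Longrightarrow> zfrom T i = Suc (zfrom T (i + lz_len T i))"
  by simp

lemma window_lb:
  "i < length T \<Longrightarrow> wchain T ws \<Longrightarrow> (case ws of [] \<Rightarrow> True | w # _ \<Rightarrow> i \<le> fst w)
     \<Longrightarrow> length ws + 1 \<le> zfrom T i"
proof (induction T i arbitrary: ws rule: zfrom.induct)
  case (1 T i)
  show ?case
  proof (cases ws)
    case Nil
    then show ?thesis using 1 by simp
  next
    case (Cons w rest)
    let ?L = "lz_len T i"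
    have ch: "fst w < snd w" "snd w < length T" "novel T (fst w) (Suc (snd w) - fst w)"
      "(case rest of [] \<Rightarrow> True | w' # _ \<Rightarrow> snd w \<le> fst w')" "wchain T rest"
      using 1(3) Cons by auto
    have iw: "i \<le> fst w" using 1(4) Cons by simp
    have bL: "i + ?L \<le> snd w"
    proof (rule ccontr)
      assume "\<not> ?thesis"
      then have "snd w < i + ?L" by simp
      then show False using not_novel_inside[OF 1(2) iw ch(1)] ch(3) by simp
    qed
    have lt: "i + ?L < length T" using bL ch(2) by simp
    show ?thesis
    proof (cases "i + ?L \<le> fst w")
      case True
      have "length ws + 1 \<le> zfrom T (i + ?L)"
        apply (rule 1(1)[OF _ lt])
        using 1(2) 1(3) Cons True by auto
      then show ?thesis using zfrom_unfold[OF 1(2)] by simp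
    next
      case False
      have cs: "case rest of [] \<Rightarrow> True | w' # _ \<Rightarrow> i + ?L \<le> fst w'"
        using ch(4) bL by (cases rest) auto
      have "length rest + 1 \<le> zfrom T (i + ?L)"
        apply (rule 1(1)[OF _ lt ch(5)])
        using 1(2) cs by auto
      then show ?thesis using zfrom_unfold[OF 1(2)] Cons by simp
    qed
  qed
qed

definition phrase_ok :: "'a list \<Rightarrow> nat \<Rightarrow> nat \<Rightarrow> bool" where
  "phrase_ok T i l \<longleftrightarrow> 1 \<le> l \<and> i + l \<le> length T \<and>
     (l = 1 \<or> (\<exists>j<i. take l (drop j T) = take l (drop i T)))"

fun vpe :: "'a list \<Rightarrow> nat \<Rightarrow> nat list \<Rightarrow> nat \<Rightarrow> bool" where
  "vpe T i [] e = (i = e)"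
| "vpe T i (l # ls) e = (phrase_ok T i l \<and> vpe T (i + l) ls e)"

lemma vpe_append: "vpe T i ls1 m \<Longrightarrow> vpe T m ls2 e \<Longrightarrow> vpe T i (ls1 @ ls2) e"
  by (induction ls1 arbitrary: i) auto

lemma zfrom_ge_len: "length T \<le> i \<Longrightarrow> zfrom T i = 0"
  by simp

lemma lz_len_ge:
  assumes "i < length T" "i + e \<le> length T" "j < i" "1 \<le> e"
    "take e (drop j T) = take e (drop i T)"
  shows "e \<le> lz_len T i"
proof -
  have "T ! j = T ! i"
  proof -
    have e0: "0 < e" using assms by simp
    have jl: "j < length T" "i < length T" using assms by simp_all
    have "take e (drop j T) ! 0 = take e (drop i T) ! 0" using assms(5) by simp
    then show ?thesis using e0 jl by (simp add: nth_take nth_drop)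
  qed
  then have inset: "T ! i \<in> set (take i T)"
  proof -
    have "take i T ! j = T ! j" using assms by simp
    moreover have "j < length (take i T)" using assms by simp
    ultimately show ?thesis by (metis nth_mem \<open>T ! j = T ! i\<close>)
  qed
  let ?P = "\<lambda>l. l \<le> length T - i \<and> (\<exists>j<i. take l (drop j T) = take l (drop i T))"
  have "e \<le> (GREATEST l. ?P l)"
    by (rule Greatest_le_nat[where b = "length T - i"]) (use assms in auto)
  then show ?thesis using inset by (simp add: lz_len_def)
qed

lemma parse_ub:
  "vpe T i ls (length T) \<Longrightarrow> i \<le> i' \<Longrightarrow> zfrom T i' \<le> length ls"
proof (induction ls arbitrary: i i')
  case Nil
  then show ?case by simp
next
  case (Cons l ls)
  have ok: "phrase_ok T i l" and rest: "vpe T (i + l) ls (length T)" using Cons.prems by auto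
  show ?case
  proof (cases "i + l \<le> i'")
    case True
    then show ?thesis using Cons.IH[OF rest True] by simp
  next
    case False
    have lenT: "i + l \<le> length T" using ok by (simp add: phrase_ok_def)
    have i'lt: "i' < length T" using False lenT by simp
    have step: "i + l \<le> i' + lz_len T i'"
    proof (cases "l = 1")
      case True
      then have "i' = i" using False Cons.prems(2) by simp
      then show ?thesis using True lz_len_pos[OF i'lt] by simp
    next
      case False': False
      then obtain j where j: "j < i" "take l (drop j T) = take l (drop i T)"
        using ok by (auto simp: phrase_ok_def)
      define d where "d = i' - i"
      define e where "e = i + l - i'"
      have de: "d + e \<le> l" using False Cons.prems(2) by (simp add: d_def e_def)
      have "take e (drop (j + d) T) = take e (drop d (drop j T))" by (simp add: add.commute)
      also have "\<dots> = take e (drop d (take l (drop j T)))"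
        by (rule take_drop_take_le[OF de, symmetric])
      also have "\<dots> = take e (drop d (take l (drop i T)))" using j by simp
      also have "\<dots> = take e (drop d (drop i T))" by (rule take_drop_take_le[OF de])
      also have "\<dots> = take e (drop i' T)" using Cons.prems(2) by (simp add: d_def add.commute)
      finally have eq: "take e (drop (j + d) T) = take e (drop i' T)" .
      have "e \<le> lz_len T i'"
        by (rule lz_len_ge[OF i'lt _ _ _ eq]) (use False Cons.prems(2) j lenT in \<open>auto simp: d_def e_def\<close>)
      then show ?thesis by (simp add: e_def)
    qed
    have "zfrom T (i' + lz_len T i') \<le> length ls"
      using Cons.IH[OF rest step] .
    then show ?thesis using zfrom_unfold[OF i'lt] by simp
  qed
qed

lemma zfrom_le_length: "zfrom T i \<le> length T - i"
proof (induction T i rule: zfrom.induct)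
  case (1 T i)
  show ?case
  proof (cases "length T \<le> i")
    case True then show ?thesis by simp
  next
    case False
    have il: "i < length T" using False by simp
    have "1 \<le> lz_len T i" using lz_len_pos[OF il] .
    then show ?thesis using 1 False zfrom_unfold[of i T] by simp
  qed
qed

lemma z_le_length: "z_SSsr T \<le> length T"
  using zfrom_le_length[of T 0] by (simp add: z_SSsr_def)

lemma z_pos: "T \<noteq> [] \<Longrightarrow> 1 \<le> z_SSsr T"
  by (simp add: z_SSsr_def)

lemma z_ub: "vpe T 0 ls (length T) \<Longrightarrow> z_SSsr T \<le> length ls"
  using parse_ub[of T 0 ls 0] by (simp add: z_SSsr_def)

lemma z_lb: "T \<noteq> [] \<Longrightarrow> wchain T ws \<Longrightarrow> length ws + 1 \<le> z_SSsr T"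
  using window_lb[of 0 T ws] by (cases ws) (auto simp: z_SSsr_def)

lemma ed_refl: "ed xs xs = 0"
  by (induction xs) auto

lemma ed_zero: "ed xs ys = 0 \<Longrightarrow> xs = ys"
  by (induction xs ys rule: ed.induct) (auto split: if_splits)

lemma ed_common_prefix: "ed (w @ xs) (w @ ys) \<le> ed xs ys"
proof (induction w)
  case Nil then show ?case by simp
next
  case (Cons a w)
  have "ed ((a # w) @ xs) ((a # w) @ ys) \<le> ed (w @ xs) (w @ ys)" by simp
  then show ?case using Cons by linarith
qed

lemma ed_sub1: "ed (A @ c # C) (A @ d # C) \<le> 1"
proof -
  have "ed (c # C) (d # C) \<le> ed C C + (if c = d then 0 else 1)"
    unfolding ed.simps by (rule min.cobounded2)
  then have "ed (c # C) (d # C) \<le> ed C C + 1" by (cases "c = d") (simp_all del: ed.simps)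
  then show ?thesis using ed_common_prefix[of A "c # C" "d # C"] ed_refl[of C] by simp
qed

lemma ed_del1: "ed (A @ c # C) (A @ C) \<le> 1"
proof -
  have "ed (c # C) C \<le> 1"
  proof (cases C)
    case Nil then show ?thesis by simp
  next
    case (Cons y ys)
    have "ed (c # y # ys) (y # ys) \<le> ed (y # ys) (y # ys) + 1" by simp
    then show ?thesis using Cons ed_refl[of "y # ys"] by simp
  qed
  then show ?thesis using ed_common_prefix[of A "c # C" C] by simp
qed

lemma ed_ins1: "ed (A @ C) (A @ d # C) \<le> 1"
proof -
  have "ed C (d # C) \<le> 1"
  proof (cases C)
    case Nil then show ?thesis by simp
  next
    case (Cons y ys)
    have "ed (y # ys) (d # y # ys) \<le> ed (y # ys) (y # ys) + 1" by simp
    then show ?thesis using Cons ed_refl[of "y # ys"] by simp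
  qed
  then show ?thesis using ed_common_prefix[of A C "d # C"] by simp
qed

lemma ed_one: "ed xs ys \<le> 1 \<Longrightarrow> xs \<noteq> ys \<Longrightarrow> ed xs ys = 1"
  using ed_zero by (metis le_neq_implies_less less_one)

lemma prefix_rep_set: "prefix w (replicate x c) \<Longrightarrow> set w \<subseteq> {c}"
proof -
  assume "prefix w (replicate x c)"
  then obtain zs where "replicate x c = w @ zs" by (auto simp: prefix_def)
  then have "\<forall>y\<in>set (w @ zs). y = c" by (metis in_set_replicate)
  then show ?thesis by auto
qed

lemma sub_lastD:
  assumes "sublist w (S @ B)" "w \<noteq> []" "last w \<notin> set B"
  shows "sublist w S"
proof -
  from assms(1) consider "sublist w S" | "sublist w B"
    | w1 w2 where "w = w1 @ w2" "suffix w1 S" "prefix w2 B"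
    unfolding sublist_append by blast
  then show ?thesis
  proof cases
    case 2
    then have "set w \<subseteq> set B" by (rule set_mono_sublist)
    then show ?thesis using assms(2,3) by (metis last_in_set subsetD)
  next
    case (3 w1 w2)
    show ?thesis
    proof (cases "w2 = []")
      case True
      then show ?thesis using 3 by (auto simp: suffix_def)
    next
      case False
      have "last w \<in> set w2" using 3(1) False by simp
      moreover have "set w2 \<subseteq> set B" using 3(3) by (auto simp: prefix_def)
      ultimately show ?thesis using assms(3) by auto
    qed
  qed simp
qed

lemma sub_notin: "sublist w S \<Longrightarrow> a \<in> set w \<Longrightarrow> a \<notin> set S \<Longrightarrow> False"
  using set_mono_sublist by fastforce

lemma sub_snocD:
  "sublist (w @ [c]) (S @ [c']) \<Longrightarrow> sublist (w @ [c]) S \<or> suffix w S"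
  by (auto simp: sublist_snoc)

lemma suffix_rep_last:
  assumes "suffix (replicate k c) (S @ replicate m c)" "m < k"
  shows "S \<noteq> [] \<and> last S = c"
proof -
  have "replicate k c = replicate (k - m) c @ replicate m c"
    using assms(2) by (simp add: replicate_add[symmetric])
  then have "suffix (replicate (k - m) c) S" using assms(1) by simp
  moreover have "replicate (k - m) c = replicate (k - m - 1) c @ [c]"
    using assms(2) by (simp add: replicate_append_same[symmetric] replicate_Suc[symmetric]
        del: replicate_Suc replicate_append_same) (metis Suc_diff_Suc replicate_Suc replicate_append_same zero_less_diff)
  ultimately show ?thesis
    by (auto simp: suffix_def)
qed

lemma sub_rep_tail:
  assumes "c \<notin> set w'" "w' \<noteq> []" "sublist (w' @ [c]) (S @ replicate x c)"
  shows "sublist (w' @ [c]) S \<or> suffix w' S"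
proof -
  from assms(3) consider "sublist (w' @ [c]) S" | "sublist (w' @ [c]) (replicate x c)"
    | w1 w2 where "w' @ [c] = w1 @ w2" "suffix w1 S" "prefix w2 (replicate x c)"
    unfolding sublist_append by blast
  then show ?thesis
  proof cases
    case 2
    then have "set (w' @ [c]) \<subseteq> set (replicate x c)" by (rule set_mono_sublist)
    then show ?thesis using assms(1,2) by (cases w') auto
  next
    case (3 w1 w2)
    have w2c: "set w2 \<subseteq> {c}" using 3(3) by (rule prefix_rep_set)
    show ?thesis
    proof (cases w2 rule: rev_cases)
      case Nil
      then have "suffix (w' @ [c]) S" using 3 by simp
      then show ?thesis by (metis suffix_def sublist_append_leftI)
    next
      case (snoc w2' y)
      have "w' = w1 @ w2'" using 3(1) snoc by simp
      have "w2' = []"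
      proof (rule ccontr)
        assume "w2' \<noteq> []"
        then have "last w2' \<in> set w'" using \<open>w' = w1 @ w2'\<close> by simp
        moreover have "last w2' = c" using w2c snoc \<open>w2' \<noteq> []\<close> by (metis last_in_set set_append subset_singletonD Un_empty_left
            Un_subset_iff empty_iff singletonD subset_iff)
        ultimately show False using assms(1) by simp
      qed
      then show ?thesis using \<open>w' = w1 @ w2'\<close> 3(2) by simp
    qed
  qed simp
qed

lemma sub_head_rep:
  assumes "S \<noteq> []" "last S \<noteq> c" "a \<noteq> c"
    "sublist (a # replicate k c) (S @ replicate x c)"
  shows "sublist (a # replicate k c) S \<or> k \<le> x"
proof -
  from assms(4) consider "sublist (a # replicate k c) S" | "sublist (a # replicate k c) (replicate x c)"
    | w1 w2 where "a # replicate k c = w1 @ w2" "suffix w1 S" "prefix w2 (replicate x c)"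
    unfolding sublist_append by blast
  then show ?thesis
  proof cases
    case 2
    then have "set (a # replicate k c) \<subseteq> set (replicate x c)" by (rule set_mono_sublist)
    then show ?thesis using assms(3) by auto
  next
    case (3 w1 w2)
    show ?thesis
    proof (cases w1)
      case Nil
      then have "prefix (a # replicate k c) (replicate x c)" using 3 by simp
      then have "set (a # replicate k c) \<subseteq> {c}" by (rule prefix_rep_set)
      then show ?thesis using assms(3) by simp
    next
      case (Cons b w1')
      have "w1' @ w2 = replicate k c" using 3(1) Cons by simp
      show ?thesis
      proof (cases "w1' = []")
        case True
        then have "w2 = replicate k c" using \<open>w1' @ w2 = replicate k c\<close> by simp
        then have "length (replicate k c) \<le> length (replicate x c)"
          using 3(3) prefix_length_le by metis
        then show ?thesis by simp
      next
        case False
        have "last w1 = last w1'" using Cons False by simp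
        moreover have "last w1' \<in> set (replicate k c)"
        proof -
          have "last w1' \<in> set (w1' @ w2)" using False by simp
          then show ?thesis using \<open>w1' @ w2 = replicate k c\<close> by simp
        qed
        moreover have "last S = last w1" using 3(2) Cons by (auto simp: suffix_def)
        ultimately show ?thesis using assms(2) by simp
      qed
    qed
  qed simp
qed

lemma prefix_rep_a_eq:
  "a \<noteq> c \<Longrightarrow> prefix (replicate k c @ [a]) (replicate m c @ a # V) \<Longrightarrow> k = m"
proof (induction k arbitrary: m)
  case 0
  then show ?case by (cases m) auto
next
  case (Suc k)
  then show ?case by (cases m) auto
qed

lemma prefix_rep_a_in:
  "a \<noteq> c \<Longrightarrow> prefix (replicate k c @ [a]) (replicate m c @ V) \<Longrightarrow> a \<in> set V"
proof (induction k arbitrary: m)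
  case 0
  then show ?case by (cases m) (auto simp: prefix_def)
next
  case (Suc k)
  show ?case
  proof (cases m)
    case 0
    then have "set (replicate (Suc k) c @ [a]) \<subseteq> set V" using Suc.prems(2)
      by (auto simp: prefix_def)
    then show ?thesis by auto
  next
    case (Suc m')
    then show ?thesis using Suc.IH[of m'] Suc.prems by simp
  qed
qed

lemma suffix_zero_twos:
  assumes "suffix (a # replicate k c) (U @ a # replicate m c)" "a \<noteq> c"
  shows "k = m"
proof -
  have "prefix (rev (a # replicate k c)) (rev (U @ a # replicate m c))"
    using assms(1) by (simp add: suffix_to_prefix)
  then have "prefix (replicate k c @ [a]) (replicate m c @ a # rev U)" by simp
  then show ?thesis using prefix_rep_a_eq assms(2) by metis
qed

lemma suffix_zero_twos_in:
  assumes "suffix (a # replicate k c) (U @ replicate m c)" "a \<noteq> c"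
  shows "a \<in> set U"
proof -
  have "prefix (rev (a # replicate k c)) (rev (U @ replicate m c))"
    using assms(1) by (simp add: suffix_to_prefix)
  then have "prefix (replicate k c @ [a]) (replicate m c @ rev U)" by simp
  then show ?thesis using prefix_rep_a_in assms(2) by fastforce
qed

definition blk :: "nat \<Rightarrow> nat \<Rightarrow> nat list" where
  "blk a y = replicate a 1 @ 0 # replicate y 2"

fun QQ :: "(nat \<Rightarrow> nat) \<Rightarrow> nat \<Rightarrow> nat list" where
  "QQ x 0 = []"
| "QQ x (Suc i) = QQ x i @ blk (x (Suc i)) (Suc i)"

definition base :: "nat \<Rightarrow> nat \<Rightarrow> nat list \<Rightarrow> nat list" where
  "base r N mid = replicate r 3 @ replicate N 1 @ mid @ replicate N 2"

definition TT :: "nat \<Rightarrow> nat \<Rightarrow> nat list \<Rightarrow> (nat \<Rightarrow> nat) \<Rightarrow> nat \<Rightarrow> nat list" where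
  "TT r N mid x i = base r N mid @ QQ x i"

lemma TT_0: "TT r N mid x 0 = base r N mid"
  by (simp add: TT_def)

lemma TT_Suc: "TT r N mid x (Suc i) = TT r N mid x i @ replicate (x (Suc i)) 1 @ 0 # replicate (Suc i) 2"
  by (simp add: TT_def blk_def)

lemma TT_prefix: "i \<le> q \<Longrightarrow> \<exists>R. TT r N mid x q = TT r N mid x i @ R"
proof (induction q)
  case 0 then show ?case by simp
next
  case (Suc q)
  show ?case
  proof (cases "i = Suc q")
    case True then show ?thesis by simp
  next
    case False
    then obtain R where "TT r N mid x q = TT r N mid x i @ R" using Suc by auto
    then show ?thesis by (simp add: TT_Suc)
  qed
qed

lemma TT_last: "1 \<le> N \<Longrightarrow> TT r N mid x i \<noteq> [] \<and> last (TT r N mid x i) = 2"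
proof (cases i)
  case 0
  assume "1 \<le> N"
  then show ?thesis using 0 by (simp add: TT_0 base_def last_appendR)
next
  case (Suc j)
  then show ?thesis by (simp add: TT_Suc last_appendR)
qed

lemma no_straddle:
  assumes "a \<notin> set X" "b \<notin> set Y" "b \<in> set w'"
  shows "\<not> sublist (a # w') (X @ Y)"
proof
  assume "sublist (a # w') (X @ Y)"
  then consider "sublist (a # w') X" | "sublist (a # w') Y"
    | w1 w2 where "a # w' = w1 @ w2" "suffix w1 X" "prefix w2 Y"
    unfolding sublist_append by blast
  then show False
  proof cases
    case 1 then show False using assms(1) sub_notin[of "a # w'" X a] by simp
  next
    case 2 then show False using assms(2,3) sub_notin[of "a # w'" Y b] by simp
  next
    case (3 w1 w2)
    show False
    proof (cases w1)
      case Nil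
      then have "set (a # w') \<subseteq> set Y" using 3 by (auto simp: prefix_def)
      then show False using assms(2,3) by auto
    next
      case (Cons c w1')
      then have "a \<in> set w1" using 3(1) by simp
      then have "a \<in> set X" using 3(2) by (auto simp: suffix_def)
      then show False using assms(1) by simp
    qed
  qed
qed

context
  fixes x :: "nat \<Rightarrow> nat"
  assumes xmono: "\<And>i. x i < x (Suc i)"
begin

lemma x_mono: "i \<le> j \<Longrightarrow> x i \<le> x j"
proof (induction j)
  case 0 then show ?case by simp
next
  case (Suc j)
  show ?case
  proof (cases "i = Suc j")
    case True then show ?thesis by simp
  next
    case False
    then have "i \<le> j" using Suc.prems by simp
    then show ?thesis using Suc.IH xmono[of j] by simp
  qed
qed

lemma invL:
  assumes hb: "\<And>k. 1 \<le> k \<Longrightarrow> \<not> sublist (replicate k 1 @ [0]) (base r N mid)"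
    and N1: "1 \<le> N" and x0: "x 0 = 0"
  shows "x j < k \<Longrightarrow> \<not> sublist (replicate k 1 @ [0]) (TT r N mid x j)"
proof (induction j arbitrary: k)
  case 0 then show ?case using hb x0 by (simp add: TT_0)
next
  case (Suc j)
  let ?w = "replicate k (1::nat) @ [0]"
  show ?case
  proof
    assume h: "sublist ?w (TT r N mid x (Suc j))"
    have "sublist ?w (((TT r N mid x j @ replicate (x (Suc j)) 1) @ [0]) @ replicate (Suc j) 2)"
      using h by (simp add: TT_Suc)
    then have "sublist ?w ((TT r N mid x j @ replicate (x (Suc j)) 1) @ [0])"
      by (rule sub_lastD) simp_all
    then consider "sublist ?w (TT r N mid x j @ replicate (x (Suc j)) 1)"
      | "suffix (replicate k 1) (TT r N mid x j @ replicate (x (Suc j)) 1)"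
      using sub_snocD[of "replicate k 1" 0 "TT r N mid x j @ replicate (x (Suc j)) 1" 0] by blast
    then show False
    proof cases
      case 1
      then have "sublist ?w (TT r N mid x j)" by (rule sub_lastD) simp_all
      moreover have "x j < k" using Suc.prems xmono[of j] by simp
      ultimately show False using Suc.IH by blast
    next
      case 2
      then have "last (TT r N mid x j) = 1" using suffix_rep_last[OF 2 Suc.prems] by blast
      then show False using TT_last[OF N1] by simp
    qed
  qed
qed

lemma stepR:
  assumes IH: "\<And>k. j < k \<Longrightarrow> \<not> sublist (0 # replicate k 2) S"
    and "m < k" "j < k"
  shows "\<not> sublist (0 # replicate k (2::nat)) (S @ replicate a 1 @ 0 # replicate m 2)"
proof
  let ?w = "0 # replicate k (2::nat)"
  assume "sublist ?w (S @ replicate a 1 @ 0 # replicate m 2)"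
  then have h: "sublist ?w ((S @ replicate a 1) @ (0 # replicate m 2))" by simp
  have A: "\<not> sublist ?w (S @ replicate a 1)"
  proof
    assume "sublist ?w (S @ replicate a 1)"
    then have "sublist ?w S" by (rule sub_lastD) (use assms(2) in auto)
    then show False using IH assms(3) by blast
  qed
  from h consider "sublist ?w (S @ replicate a 1)" | "sublist ?w (0 # replicate m 2)"
    | w1 w2 where "?w = w1 @ w2" "suffix w1 (S @ replicate a 1)" "prefix w2 (0 # replicate m 2)"
    unfolding sublist_append by blast
  then show False
  proof cases
    case 1 then show False using A by simp
  next
    case 2 then show False using sublist_length_le assms(2) by fastforce
  next
    case (3 w1 w2)
    show False
    proof (cases w1)
      case Nil
      then show False using 3 prefix_length_le assms(2) by fastforce
    next
      case (Cons c w1')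
      show False
      proof (cases w2)
        case Nil
        then have "suffix ?w (S @ replicate a 1)" using 3 Cons by simp
        then show False using A by (metis suffix_def sublist_append_leftI)
      next
        case (Cons d w2')
        have "replicate k 2 = w1' @ w2" using 3(1) \<open>w1 = c # w1'\<close> by simp
        then have "d \<in> set (replicate k (2::nat))" using Cons by simp
        moreover have "d = 0" using 3(3) Cons by (simp add: prefix_def)
        ultimately show False by simp
      qed
    qed
  qed
qed

lemma invR:
  assumes "0 \<notin> set mid"
  shows "j < k \<Longrightarrow> \<not> sublist (0 # replicate k 2) (TT r N mid x j)"
proof (induction j arbitrary: k)
  case 0
  have "0 \<notin> set (base r N mid)" using assms by (simp add: base_def)
  then show ?case using sub_notin[of "0 # replicate k 2" "base r N mid" 0] by (auto simp: TT_0)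
next
  case (Suc j)
  show ?case unfolding TT_Suc by (rule stepR[OF Suc.IH]) (use Suc.prems in auto)
qed

lemma winR_cond:
  assumes "0 \<notin> set mid" "1 \<le> i"
  shows "\<not> sublist (0 # replicate i 2) (TT r N mid x (i - 1) @ replicate (x i) 1 @ 0 # replicate (i - 1) 2)"
  by (rule stepR[where j = "i - 1"]) (use invR[OF assms(1)] assms(2) in auto)

lemma invR':
  assumes H1: "\<And>k. \<not> sublist (0 # replicate k 2 @ [1]) (base r N mid)"
    and H2: "\<And>k. suffix (0 # replicate k 2) (base r N mid) \<Longrightarrow> k = N"
  shows "sublist (0 # replicate k 2 @ [1]) (TT r N mid x j) \<Longrightarrow> k < j \<or> k = N"
proof (induction j)
  case 0 then show ?case using H1 by (simp add: TT_0)
next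
  case (Suc j)
  let ?w = "0 # replicate k (2::nat) @ [1]"
  have "sublist ?w ((TT r N mid x j @ replicate (x (Suc j)) 1) @ (0 # replicate (Suc j) 2))"
    using Suc.prems by (simp add: TT_Suc)
  then have "sublist ?w (TT r N mid x j @ replicate (x (Suc j)) 1)"
    by (rule sub_lastD) simp_all
  then have "sublist ((0 # replicate k 2) @ [1]) (TT r N mid x j @ replicate (x (Suc j)) 1)" by simp
  then have "sublist ((0 # replicate k 2) @ [1]) (TT r N mid x j) \<or> suffix (0 # replicate k 2) (TT r N mid x j)"
    by (rule sub_rep_tail[rotated 2]) auto
  then show ?case
  proof
    assume "sublist ((0 # replicate k 2) @ [1]) (TT r N mid x j)"
    then show ?thesis using Suc.IH by auto
  next
    assume suf: "suffix (0 # replicate k 2) (TT r N mid x j)"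
    show ?thesis
    proof (cases j)
      case 0 then show ?thesis using H2 suf by (simp add: TT_0)
    next
      case (Suc j')
      have "suffix (0 # replicate k 2) ((TT r N mid x j' @ replicate (x (Suc j')) 1) @ 0 # replicate (Suc j') (2::nat))"
        using suf Suc by (simp add: TT_Suc)
      then have "k = Suc j'" by (rule suffix_zero_twos) simp
      then show ?thesis using Suc by simp
    qed
  qed
qed

lemma invB:
  assumes H3: "\<And>k. sublist (2 # replicate k 1) (base r N mid) \<Longrightarrow> k = 0"
    and N1: "1 \<le> N"
  shows "sublist (2 # replicate k 1) (TT r N mid x j) \<Longrightarrow> k \<le> x j"
proof (induction j)
  case 0 then show ?case using H3[of k] by (simp add: TT_0)
next
  case (Suc j)
  show ?case
  proof (cases k)
    case 0 then show ?thesis by simp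
  next
    case (Suc k')
    let ?w = "2 # replicate k (1::nat)"
    have "sublist ?w ((TT r N mid x j @ replicate (x (Suc j)) 1) @ (0 # replicate (Suc j) 2))"
      using Suc.prems by (simp add: TT_Suc)
    then have "sublist ?w (TT r N mid x j @ replicate (x (Suc j)) 1)"
      by (rule sub_lastD) (use Suc in auto)
    then have "sublist ?w (TT r N mid x j) \<or> k \<le> x (Suc j)"
      by (rule sub_head_rep[rotated 3]) (use TT_last[OF N1] in auto)
    then show ?thesis using Suc.IH xmono[of j] by auto
  qed
qed

end

lemma base_L_nozero:
  assumes "0 \<notin> set mid"
  shows "\<not> sublist (replicate k 1 @ [0]) (base r N mid)"
proof
  assume h: "sublist (replicate k 1 @ [0]) (base r N mid)"
  have "0 \<notin> set (base r N mid)" using assms by (simp add: base_def)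
  then show False using sub_notin[OF h, of 0] by simp
qed

lemma base_L_90:
  assumes "1 \<le> k"
  shows "\<not> sublist (replicate k 1 @ [0]) (base r N [9,0])"
proof
  let ?U = "replicate r 3 @ replicate N 1 @ [9::nat]"
  assume h: "sublist (replicate k 1 @ [0]) (base r N [9,0])"
  have "sublist (replicate k 1 @ [0]) ((?U @ [0]) @ replicate N 2)"
    using h by (simp add: base_def)
  then have "sublist (replicate k 1 @ [0]) (?U @ [0])" by (rule sub_lastD) simp_all
  then have "sublist (replicate k 1 @ [0]) ?U \<or> suffix (replicate k 1) ?U"
    using sub_snocD[of "replicate k 1" 0 ?U 0] by blast
  then show False
  proof
    assume h2: "sublist (replicate k 1 @ [0]) ?U"
    show False using sub_notin[OF h2, of 0] by simp
  next
    assume "suffix (replicate k 1) ?U"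
    then have "suffix (replicate k 1) (?U @ replicate 0 1)" by simp
    then have "last ?U = 1" using suffix_rep_last assms by fastforce
    then show False by simp
  qed
qed

lemma base_H1:
  assumes "1 \<notin> set mid"
  shows "\<not> sublist (0 # replicate k 2 @ [1]) (base r N mid)"
proof -
  have "\<not> sublist (0 # (replicate k 2 @ [1])) ((replicate r 3 @ replicate N 1) @ (mid @ replicate N 2))"
    by (rule no_straddle[where b = 1]) (use assms in auto)
  then show ?thesis by (simp add: base_def)
qed

lemma base_H2_0:
  assumes "suffix (0 # replicate k 2) (base r N [0])"
  shows "k = N"
proof -
  have "suffix (0 # replicate k 2) ((replicate r 3 @ replicate N 1) @ 0 # replicate N (2::nat))"
    using assms by (simp add: base_def)
  then show ?thesis by (rule suffix_zero_twos) simp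
qed

lemma base_H2_90:
  assumes "suffix (0 # replicate k 2) (base r N [9,0])"
  shows "k = N"
proof -
  have "suffix (0 # replicate k 2) ((replicate r 3 @ replicate N 1 @ [9]) @ 0 # replicate N (2::nat))"
    using assms by (simp add: base_def)
  then show ?thesis by (rule suffix_zero_twos) simp
qed

lemma base_H2_nz:
  assumes "0 \<notin> set mid" "suffix (0 # replicate k 2) (base r N mid)"
  shows "k = N"
proof -
  have "suffix (0 # replicate k 2) ((replicate r 3 @ replicate N 1 @ mid) @ replicate N (2::nat))"
    using assms by (simp add: base_def)
  then have "0 \<in> set (replicate r 3 @ replicate N 1 @ mid)" by (rule suffix_zero_twos_in) simp
  then show ?thesis using assms(1) by simp
qed

lemma base_H3:
  assumes "2 \<notin> set mid" "sublist (2 # replicate k 1) (base r N mid)"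
  shows "k = 0"
proof (rule ccontr)
  assume "k \<noteq> 0"
  have "\<not> sublist (2 # replicate k 1) ((replicate r 3 @ replicate N 1 @ mid) @ replicate N (2::nat))"
    by (rule no_straddle[where b = 1]) (use assms \<open>k \<noteq> 0\<close> in auto)
  then show False using assms(2) by (simp add: base_def)
qed

lemma novel_bridge:
  assumes "w \<noteq> []" "\<not> sublist w (A @ butlast w)"
  shows "novel (A @ w @ R) (length A) (length w)"
  unfolding novel_def
proof (intro allI impI)
  fix j assume j: "j < length A"
  let ?U = "A @ butlast w"
  have wsplit: "w = butlast w @ [last w]" using assms(1) by simp
  have T: "A @ w @ R = ?U @ (last w # R)"
    by (subst wsplit) simp
  have lenU: "j + length w \<le> length ?U" using j assms(1) by (cases w rule: rev_cases) auto
  have "take (length w) (drop j (A @ w @ R)) = take (length w) (drop j ?U)"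
    unfolding T using lenU by (simp add: take_append)
  moreover have "take (length w) (drop (length A) (A @ w @ R)) = w" by simp
  moreover have "sublist (take (length w) (drop j ?U)) ?U"
    by (meson sublist_drop sublist_take sublist_order.order_trans)
  ultimately show "take (length w) (drop j (A @ w @ R)) \<noteq> take (length w) (drop (length A) (A @ w @ R))"
    using assms(2) by metis
qed

lemma novel_append: "novel S a l \<Longrightarrow> a + l \<le> length S \<Longrightarrow> novel (S @ R) a l"
  unfolding novel_def by (auto simp: take_append)

definition ok :: "'a list \<Rightarrow> nat \<times> nat \<Rightarrow> bool" where
  "ok T w \<longleftrightarrow> fst w < snd w \<and> snd w < length T \<and> novel T (fst w) (Suc (snd w) - fst w)"

lemma wchain_single: "wchain T [w] = ok T w"
  by (simp add: ok_def)

lemma wchain_cons2: "wchain T (w1 # w2 # ws) = (ok T w1 \<and> snd w1 \<le> fst w2 \<and> wchain T (w2 # ws))"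
  by (auto simp: ok_def)

lemma wchain_append:
  "wchain T xs \<Longrightarrow> wchain T ys \<Longrightarrow> (xs \<noteq> [] \<Longrightarrow> ys \<noteq> [] \<Longrightarrow> snd (last xs) \<le> fst (hd ys))
    \<Longrightarrow> wchain T (xs @ ys)"
proof (induction xs)
  case Nil then show ?case by simp
next
  case (Cons w xs)
  show ?case
  proof (cases xs)
    case Nil
    then show ?thesis using Cons.prems by (cases ys) (auto simp: ok_def)
  next
    case (Cons w' xs')
    then show ?thesis using Cons.prems Cons.IH by auto
  qed
qed

lemma ok_append: "ok S w \<Longrightarrow> ok (S @ R) w"
  unfolding ok_def using novel_append[of S "fst w" "Suc (snd w) - fst w" R] by auto

definition wB :: "nat \<Rightarrow> nat \<Rightarrow> nat list \<Rightarrow> (nat \<Rightarrow> nat) \<Rightarrow> nat \<Rightarrow> nat \<times> nat" where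
  "wB r N mid x i = (length (TT r N mid x i) - 1, length (TT r N mid x i) - 1 + (x (Suc i) - x i))"
definition wL :: "nat \<Rightarrow> nat \<Rightarrow> nat list \<Rightarrow> (nat \<Rightarrow> nat) \<Rightarrow> nat \<Rightarrow> nat \<times> nat" where
  "wL r N mid x i = (length (TT r N mid x i) + (x (Suc i) - x i) - 1, length (TT r N mid x i) + x (Suc i))"
definition wR :: "nat \<Rightarrow> nat \<Rightarrow> nat list \<Rightarrow> (nat \<Rightarrow> nat) \<Rightarrow> nat \<Rightarrow> nat \<times> nat" where
  "wR r N mid x i = (length (TT r N mid x i) + x (Suc i), length (TT r N mid x i) + x (Suc i) + Suc i)"
definition wR' :: "nat \<Rightarrow> nat \<Rightarrow> nat list \<Rightarrow> (nat \<Rightarrow> nat) \<Rightarrow> nat \<Rightarrow> nat \<times> nat" where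
  "wR' r N mid x i = (length (TT r N mid x i) + x (Suc i), length (TT r N mid x (Suc i)))"

lemma len_TT_Suc: "length (TT r N mid x (Suc i)) = length (TT r N mid x i) + x (Suc i) + Suc i + 1"
  by (simp add: TT_Suc)

lemma len_TT_pos: "1 \<le> N \<Longrightarrow> 1 \<le> length (TT r N mid x i)"
  using TT_last[of N r mid x i] by (cases "TT r N mid x i") auto

lemma butlast_rep: "butlast (a # replicate n a) = replicate n a"
  by (induction n) auto

lemma cons_rep_pred: "0 < n \<Longrightarrow> a # replicate (n - Suc 0) a = replicate n a"
  by (cases n) auto

lemma butlast_rep2: "butlast (replicate n a) = replicate (n - 1) a"
proof (cases n)
  case 0 then show ?thesis by simp
next
  case (Suc m) then show ?thesis by (metis butlast_rep replicate_Suc diff_Suc_1)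
qed

context
  fixes x :: "nat \<Rightarrow> nat"
  assumes xmono: "\<And>i. x i < x (Suc i)" and x0: "x 0 = 0"
begin

lemma ok_lift: "ok (TT r N mid x j) w \<Longrightarrow> j \<le> q \<Longrightarrow> ok (TT r N mid x q) w"
  using TT_prefix[of j q r N mid x] ok_append by metis

lemma okB:
  assumes N1: "1 \<le> N" and m2: "2 \<notin> set mid" and big: "x i < x (Suc i) - x i"
  shows "ok (TT r N mid x (Suc i)) (wB r N mid x i)"
proof -
  let ?S = "TT r N mid x i"
  let ?A = "butlast ?S"
  define \<beta> where "\<beta> = x (Suc i) - x i"
  have b1: "1 \<le> \<beta>" using big by (simp add: \<beta>_def)
  have xs: "x (Suc i) = \<beta> + x i" using xmono[of i] by (simp add: \<beta>_def)
  have S: "?S = ?A @ [2]" using TT_last[OF N1, of r mid x i]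
    by (metis append_butlast_last_id)
  have T: "TT r N mid x (Suc i) = ?A @ (2 # replicate \<beta> 1) @ (replicate (x i) 1 @ 0 # replicate (Suc i) 2)"
    by (subst TT_Suc, subst S) (simp add: xs replicate_add)
  have bl: "butlast (2 # replicate \<beta> (1::nat)) = 2 # replicate (\<beta> - 1) 1"
    using b1 by (cases \<beta>) (auto simp: butlast_rep2 cons_rep_pred)
  have ns: "\<not> sublist (2 # replicate \<beta> (1::nat)) (?A @ butlast (2 # replicate \<beta> 1))"
  proof
    assume "sublist (2 # replicate \<beta> (1::nat)) (?A @ butlast (2 # replicate \<beta> 1))"
    then have "sublist (2 # replicate \<beta> (1::nat)) (?A @ 2 # replicate (\<beta> - 1) 1)"
      by (simp only: bl)
    then have "sublist (2 # replicate \<beta> (1::nat)) (?S @ replicate (\<beta> - 1) 1)"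
      by (subst S) simp
    then have "sublist (2 # replicate \<beta> (1::nat)) ?S \<or> \<beta> \<le> \<beta> - 1"
      by (rule sub_head_rep[rotated 3]) (use TT_last[OF N1] in auto)
    then show False
    proof
      assume h: "sublist (2 # replicate \<beta> (1::nat)) ?S"
      have "\<beta> \<le> x i" using invB[where x = x, OF xmono base_H3[OF m2] N1 h] by simp
      then show False using big by (simp add: \<beta>_def)
    qed (use b1 in simp)
  qed
  have nov: "novel (TT r N mid x (Suc i)) (length ?A) (length (2 # replicate \<beta> (1::nat)))"
    unfolding T by (rule novel_bridge) (use ns in simp_all)
  have lA: "length ?A = length ?S - 1" by simp
  have lS: "1 \<le> length ?S" using len_TT_pos[OF N1] .
  show ?thesis unfolding ok_def wB_def
    using nov lA lS b1 xs len_TT_Suc[of r N mid x i] by (simp add: \<beta>_def[symmetric]; linarith)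
qed

lemma okL:
  assumes N1: "1 \<le> N" and hb: "\<And>k. 1 \<le> k \<Longrightarrow> \<not> sublist (replicate k 1 @ [0]) (base r N mid)"
  shows "ok (TT r N mid x (Suc i)) (wL r N mid x i)"
proof -
  let ?S = "TT r N mid x i"
  define \<beta> where "\<beta> = x (Suc i) - x i"
  have b1: "1 \<le> \<beta>" using xmono[of i] by (simp add: \<beta>_def)
  have xs: "x (Suc i) = (\<beta> - 1) + Suc (x i)" using xmono[of i] by (simp add: \<beta>_def)
  let ?A = "?S @ replicate (\<beta> - 1) 1"
  let ?w = "replicate (Suc (x i)) (1::nat) @ [0]"
  have T: "TT r N mid x (Suc i) = ?A @ ?w @ replicate (Suc i) 2"
    by (subst TT_Suc, subst xs, simp only: replicate_add) simp
  have ns: "\<not> sublist ?w (?A @ butlast ?w)"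
  proof
    assume "sublist ?w (?A @ butlast ?w)"
    then have "sublist ?w (?S @ (replicate (\<beta> - 1) 1 @ replicate (Suc (x i)) 1))" by simp
    then have "sublist ?w ?S" by (rule sub_lastD) simp_all
    moreover have "\<not> sublist ?w ?S" by (rule invL[where x = x, OF xmono hb N1 x0]) simp_all
    ultimately show False by simp
  qed
  have nov: "novel (TT r N mid x (Suc i)) (length ?A) (length ?w)"
    unfolding T by (rule novel_bridge) (use ns in simp_all)
  show ?thesis unfolding ok_def wL_def
    using nov b1 xs len_TT_Suc[of r N mid x i] by (simp add: \<beta>_def[symmetric])
qed

lemma okR:
  assumes m0: "0 \<notin> set mid"
  shows "ok (TT r N mid x (Suc i)) (wR r N mid x i)"
proof -
  let ?S = "TT r N mid x i"
  let ?A = "?S @ replicate (x (Suc i)) 1"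
  let ?w = "0 # replicate (Suc i) (2::nat)"
  have T: "TT r N mid x (Suc i) = ?A @ ?w @ []" by (simp add: TT_Suc)
  have "\<not> sublist ?w (TT r N mid x (Suc i - 1) @ replicate (x (Suc i)) 1 @ 0 # replicate (Suc i - 1) 2)"
    by (rule winR_cond[where x = x, OF xmono m0]) simp
  moreover have "?A @ butlast ?w = TT r N mid x (Suc i - 1) @ replicate (x (Suc i)) 1 @ 0 # replicate (Suc i - 1) 2"
    by (simp add: butlast_rep2 cons_rep_pred)
  ultimately have ns: "\<not> sublist ?w (?A @ butlast ?w)" by simp
  have nov: "novel (TT r N mid x (Suc i)) (length ?A) (length ?w)"
    unfolding T by (rule novel_bridge) (use ns in simp_all)
  show ?thesis unfolding ok_def wR_def
    using nov len_TT_Suc[of r N mid x i] by simp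
qed

lemma okR':
  assumes m1: "1 \<notin> set mid" and H2: "\<And>k. suffix (0 # replicate k 2) (base r N mid) \<Longrightarrow> k = N"
    and neq: "Suc i \<noteq> N"
  shows "ok (TT r N mid x (Suc (Suc i))) (wR' r N mid x i)"
proof -
  let ?S = "TT r N mid x i"
  let ?A = "?S @ replicate (x (Suc i)) 1"
  let ?w = "0 # replicate (Suc i) (2::nat) @ [1]"
  have x1: "1 \<le> x (Suc (Suc i))" using xmono[of "Suc i"] by simp
  have T: "TT r N mid x (Suc (Suc i)) = ?A @ ?w @ (replicate (x (Suc (Suc i)) - 1) 1 @ 0 # replicate (Suc (Suc i)) 2)"
  proof -
    have "replicate (x (Suc (Suc i))) (1::nat) = 1 # replicate (x (Suc (Suc i)) - 1) 1"
      using x1 by (cases "x (Suc (Suc i))") auto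
    then show ?thesis by (simp add: TT_Suc)
  qed
  have ns: "\<not> sublist ?w (?A @ butlast ?w)"
  proof
    assume "sublist ?w (?A @ butlast ?w)"
    then have h: "sublist (0 # replicate (Suc i) 2 @ [1]) (TT r N mid x (Suc i))"
      by (simp add: TT_Suc butlast_append)
    have "Suc i < Suc i \<or> Suc i = N"
      using invR'[where x = x, OF xmono base_H1[OF m1] H2 h] by simp
    then show False using neq by simp
  qed
  have nov: "novel (TT r N mid x (Suc (Suc i))) (length ?A) (length ?w)"
    unfolding T by (rule novel_bridge) (use ns in simp_all)
  have e: "Suc (length (TT r N mid x (Suc i))) - (length (TT r N mid x i) + x (Suc i)) = length ?w"
    using len_TT_Suc[of r N mid x i] by simp
  show ?thesis unfolding ok_def wR'_def fst_conv snd_conv e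
    using nov len_TT_Suc[of r N mid x i] len_TT_Suc[of r N mid x "Suc i"] by simp
qed

end

fun ws3 :: "nat \<Rightarrow> nat \<Rightarrow> nat list \<Rightarrow> (nat \<Rightarrow> nat) \<Rightarrow> nat \<Rightarrow> (nat \<times> nat) list" where
  "ws3 r N mid x 0 = []"
| "ws3 r N mid x (Suc i) = ws3 r N mid x i @ [wB r N mid x i, wL r N mid x i, wR r N mid x i]"

fun ws2 :: "nat \<Rightarrow> nat \<Rightarrow> nat list \<Rightarrow> (nat \<Rightarrow> nat) \<Rightarrow> nat \<Rightarrow> (nat \<times> nat) list" where
  "ws2 r N mid x 0 = []"
| "ws2 r N mid x (Suc i) = ws2 r N mid x i @ (case i of 0 \<Rightarrow> [] | Suc j \<Rightarrow> [wR' r N mid x j]) @ [wL r N mid x i]"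

fun wsR :: "nat \<Rightarrow> nat \<Rightarrow> nat list \<Rightarrow> (nat \<Rightarrow> nat) \<Rightarrow> nat \<Rightarrow> (nat \<times> nat) list" where
  "wsR r N mid x 0 = []"
| "wsR r N mid x (Suc i) = wsR r N mid x i @ [wR' r N mid x i]"

lemma len_ws3: "length (ws3 r N mid x i) = 3 * i"
  by (induction i) auto

lemma len_ws2: "length (ws2 r N mid x (Suc i)) = 2 * i + 1"
  by (induction i) auto

lemma len_wsR: "length (wsR r N mid x i) = i"
  by (induction i) auto

context
  fixes x :: "nat \<Rightarrow> nat"
  assumes xmono: "\<And>i. x i < x (Suc i)" and x0: "x 0 = 0"
begin

lemma chain3:
  assumes N1: "1 \<le> N" and m2: "2 \<notin> set mid" and m0: "0 \<notin> set mid"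
    and hb: "\<And>k. 1 \<le> k \<Longrightarrow> \<not> sublist (replicate k 1 @ [0]) (base r N mid)"
    and big: "\<And>i. x i < x (Suc i) - x i"
  shows "i \<le> q \<Longrightarrow> wchain (TT r N mid x q) (ws3 r N mid x i)"
proof (induction i)
  case 0 then show ?case by simp
next
  case (Suc i)
  let ?T = "TT r N mid x q"
  have iq: "Suc i \<le> q" using Suc.prems .
  have oB: "ok ?T (wB r N mid x i)"
    by (rule ok_lift[OF xmono x0 okB[OF xmono x0 N1 m2 big] iq])
  have oL: "ok ?T (wL r N mid x i)"
    by (rule ok_lift[OF xmono x0 okL[OF xmono x0 N1 hb] iq])
  have oR: "ok ?T (wR r N mid x i)"
    by (rule ok_lift[OF xmono x0 okR[OF xmono x0 m0] iq])
  have lp: "1 \<le> length (TT r N mid x i)" by (rule len_TT_pos[OF N1])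
  have b1: "1 \<le> x (Suc i) - x i" using xmono[of i] by simp
  have tri: "wchain ?T [wB r N mid x i, wL r N mid x i, wR r N mid x i]"
    unfolding wchain_cons2 wchain_single using oB oL oR lp b1 by (simp add: wB_def wL_def wR_def)
  have adj: "ws3 r N mid x i \<noteq> [] \<Longrightarrow> snd (last (ws3 r N mid x i)) \<le> fst (wB r N mid x i)"
  proof -
    assume ne: "ws3 r N mid x i \<noteq> []"
    then obtain j where j: "i = Suc j" by (cases i) auto
    show ?thesis using j len_TT_Suc[of r N mid x j] by (simp add: wR_def wB_def)
  qed
  show ?case
    using wchain_append[OF Suc.IH[OF Suc_leD[OF iq]] tri] adj by simp
qed

lemma chain2:
  assumes N1: "1 \<le> N" and m1: "1 \<notin> set mid"
    and hb: "\<And>k. 1 \<le> k \<Longrightarrow> \<not> sublist (replicate k 1 @ [0]) (base r N mid)"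
    and H2: "\<And>k. suffix (0 # replicate k 2) (base r N mid) \<Longrightarrow> k = N"
    and qN: "q < N"
  shows "i \<le> q \<Longrightarrow> wchain (TT r N mid x q) (ws2 r N mid x i)"
proof (induction i)
  case 0 then show ?case by simp
next
  case (Suc i)
  let ?T = "TT r N mid x q"
  have iq: "Suc i \<le> q" using Suc.prems .
  have oL: "ok ?T (wL r N mid x i)"
    by (rule ok_lift[OF xmono x0 okL[OF xmono x0 N1 hb] iq])
  show ?case
  proof (cases i)
    case 0
    then have "ws2 r N mid x (Suc i) = [wL r N mid x i]" by simp
    then show ?thesis using oL wchain_single by metis
  next
    case (Suc j)
    have nj: "Suc j \<noteq> N" using Suc iq qN by linarith
    have o0: "ok (TT r N mid x (Suc (Suc j))) (wR' r N mid x j)"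
      by (rule okR'[where r = r and N = N and mid = mid and i = j, OF xmono x0 m1 H2 nj])
    have oR: "ok ?T (wR' r N mid x j)"
      by (rule ok_lift[OF xmono x0 o0]) (use Suc iq in simp)
    have b1: "1 \<le> x (Suc i) - x i" using xmono[of i] by simp
    have tw: "wchain ?T [wR' r N mid x j, wL r N mid x i]"
      unfolding wchain_cons2 wchain_single using oR oL b1 Suc len_TT_Suc[of r N mid x j]
      by (simp add: wR'_def wL_def)
    have ne: "ws2 r N mid x i \<noteq> []" using Suc by simp
    have lst: "last (ws2 r N mid x i) = wL r N mid x j" using Suc by simp
    have adj: "snd (last (ws2 r N mid x i)) \<le> fst (wR' r N mid x j)"
      unfolding lst by (simp add: wL_def wR'_def)
    show ?thesis
      using wchain_append[OF Suc.IH[OF Suc_leD[OF iq]] tw] adj Suc by simp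
  qed
qed

lemma chainR:
  assumes m1: "1 \<notin> set mid"
    and H2: "\<And>k. suffix (0 # replicate k 2) (base r N mid) \<Longrightarrow> k = N"
    and qN: "q < N"
  shows "Suc m \<le> q \<Longrightarrow> wchain (TT r N mid x q) (wsR r N mid x m)"
proof (induction m)
  case 0 then show ?case by simp
next
  case (Suc m)
  let ?T = "TT r N mid x q"
  have nm: "Suc m \<noteq> N" using Suc.prems qN by linarith
  have o0: "ok (TT r N mid x (Suc (Suc m))) (wR' r N mid x m)"
    by (rule okR'[where r = r and N = N and mid = mid and i = m, OF xmono x0 m1 H2 nm])
  have oR: "ok ?T (wR' r N mid x m)"
    by (rule ok_lift[OF xmono x0 o0]) (use Suc in simp)
  have adj: "wsR r N mid x m \<noteq> [] \<Longrightarrow> snd (last (wsR r N mid x m)) \<le> fst (wR' r N mid x m)"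
  proof -
    assume "wsR r N mid x m \<noteq> []"
    then obtain j where j: "m = Suc j" by (cases m) auto
    show ?thesis using j by (simp add: wR'_def)
  qed
  show ?case
    using wchain_append[OF Suc.IH wchain_single[THEN iffD2, OF oR]] adj Suc.prems by simp
qed

end

definition runparse :: "nat \<Rightarrow> nat list" where
  "runparse m = (if m = 0 then [] else if m = 1 then [1] else [1, m - 1])"

lemma len_runparse: "length (runparse m) \<le> 2"
  by (simp add: runparse_def)

lemma phrase_ok_lit: "i < length T \<Longrightarrow> phrase_ok T i 1"
  by (simp add: phrase_ok_def)

lemma run_vpe: "vpe (X @ replicate m c @ Y) (length X) (runparse m) (length X + m)"
proof -
  let ?T = "X @ replicate m c @ Y"
  consider "m = 0" | "m = 1" | "2 \<le> m" by linarith
  then show ?thesis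
  proof cases
    case 1 then show ?thesis by (simp add: runparse_def)
  next
    case 2 then show ?thesis by (simp add: runparse_def phrase_ok_def)
  next
    case 3
    have p1: "phrase_ok ?T (length X) 1" using 3 by (simp add: phrase_ok_def)
    have e1: "take (m - 1) (drop (length X) ?T) = replicate (m - 1) c" using 3 by simp
    have e2: "take (m - 1) (drop (Suc (length X)) ?T) = replicate (m - 1) c"
    proof -
      have "drop (Suc (length X)) ?T = replicate (m - 1) c @ Y"
        using 3 by (cases m) auto
      then show ?thesis by simp
    qed
    have p2: "phrase_ok ?T (Suc (length X)) (m - 1)"
      unfolding phrase_ok_def using 3 e1 e2 by (auto intro!: exI[of _ "length X"])
    show ?thesis using 3 p1 p2 by (simp add: runparse_def)
  qed
qed

lemma phrase_ok_append: "phrase_ok S i l \<Longrightarrow> phrase_ok (S @ R) i l"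
  unfolding phrase_ok_def by (auto simp: take_append)

lemma vpe_lift: "vpe S i ls e \<Longrightarrow> vpe (S @ R) i ls e"
  by (induction ls arbitrary: i) (auto simp: phrase_ok_append)

lemma len_TT: "length (TT r N mid x q) = r + N + length mid + N + length (QQ x q)"
  by (simp add: TT_def base_def)

context
  fixes x :: "nat \<Rightarrow> nat"
  assumes xmono: "\<And>i. x i < x (Suc i)" and x0: "x 0 = 0"
begin

lemma block_phrase:
  assumes iq: "Suc i \<le> q" and xN: "x q \<le> N" and qN: "q \<le> N"
  shows "phrase_ok (TT r N [0] x q) (length (TT r N [0] x i)) (x (Suc i) + Suc i + 1)"
proof -
  let ?T = "TT r N [0] x q"
  let ?a = "x (Suc i)"
  let ?y = "Suc i"
  let ?blk = "replicate ?a (1::nat) @ 0 # replicate ?y 2"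
  have aN: "?a \<le> N" using x_mono[where x = x, OF xmono iq] xN by simp
  have yN: "?y \<le> N" using iq qN by simp
  obtain R where R: "?T = TT r N [0] x (Suc i) @ R" using TT_prefix[OF iq] by blast
  have T1: "?T = TT r N [0] x i @ ?blk @ R" using R by (simp add: TT_Suc)
  have rep1: "replicate N (1::nat) = replicate (N - ?a) 1 @ replicate ?a 1"
    using aN by (simp add: replicate_add[symmetric])
  have rep2: "replicate N (2::nat) = replicate ?y 2 @ replicate (N - ?y) 2"
    using yN by (metis replicate_add le_add_diff_inverse)
  have T2: "?T = (replicate r 3 @ replicate (N - ?a) 1) @ ?blk @ (replicate (N - ?y) 2 @ QQ x q)"
    unfolding TT_def base_def by (subst rep1, subst rep2) simp
  have e1: "take (length ?blk) (drop (length (TT r N [0] x i)) ?T) = ?blk"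
    by (subst T1) simp
  have e2: "take (length ?blk) (drop (r + (N - ?a)) ?T) = ?blk"
    by (subst T2) simp
  have jl: "r + (N - ?a) < length (TT r N [0] x i)"
    using len_TT[of r N "[0]" x i] by simp
  have ll: "length ?blk = x (Suc i) + Suc i + 1" by simp
  have lenT: "length (TT r N [0] x i) + length ?blk \<le> length ?T"
    using T1 by simp
  show ?thesis unfolding phrase_ok_def
    using e1 e2 jl lenT ll by (metis le_add2 add_gr_0 less_one not_le zero_less_Suc)
qed

end

context
  fixes x :: "nat \<Rightarrow> nat"
  assumes xmono: "\<And>i. x i < x (Suc i)" and x0: "x 0 = 0"
begin

lemma blocks_vpe:
  assumes xN: "x q \<le> N" and qN: "q \<le> N"
  shows "i \<le> q \<Longrightarrow> vpe (TT r N [0] x q) (length (base r N [0]))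
           (map (\<lambda>i. x (Suc i) + Suc i + 1) [0..<i]) (length (TT r N [0] x i))"
proof (induction i)
  case 0 then show ?case by (simp add: TT_0)
next
  case (Suc i)
  have p: "phrase_ok (TT r N [0] x q) (length (TT r N [0] x i)) (x (Suc i) + Suc i + 1)"
    by (rule block_phrase[OF xmono x0 Suc.prems xN qN])
  have v1: "vpe (TT r N [0] x q) (length (TT r N [0] x i)) [x (Suc i) + Suc i + 1] (length (TT r N [0] x (Suc i)))"
    using p len_TT_Suc[of r N "[0]" x i] by simp
  show ?case using vpe_append[OF Suc.IH[OF Suc_leD[OF Suc.prems]] v1] by simp
qed

lemma z_T0_ub:
  assumes xN: "x q \<le> N" and qN: "q \<le> N"
  shows "z_SSsr (TT r N [0] x q) \<le> q + 7"
proof -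
  let ?T = "TT r N [0] x q"
  let ?R = "QQ x q"
  have T: "?T = replicate r 3 @ replicate N 1 @ [0] @ replicate N 2 @ ?R"
    by (simp add: TT_def base_def)
  have v1: "vpe ?T 0 (runparse r) r"
    using run_vpe[of "[]" r 3 "replicate N 1 @ [0] @ replicate N 2 @ ?R"] T by simp
  have v2: "vpe ?T r (runparse N) (r + N)"
    using run_vpe[of "replicate r 3" N 1 "[0] @ replicate N 2 @ ?R"] T by simp
  have v3: "vpe ?T (r + N) [1] (r + N + 1)"
    using T by (simp add: phrase_ok_def)
  have v4: "vpe ?T (r + N + 1) (runparse N) (r + N + 1 + N)"
    using run_vpe[of "replicate r 3 @ replicate N 1 @ [0]" N 2 ?R] T by simp
  have v5: "vpe ?T (r + N + 1 + N) (map (\<lambda>i. x (Suc i) + Suc i + 1) [0..<q]) (length ?T)"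
    using blocks_vpe[OF xN qN, of q r] by (simp add: base_def ac_simps)
  have v: "vpe ?T 0 (runparse r @ runparse N @ [1] @ runparse N @ map (\<lambda>i. x (Suc i) + Suc i + 1) [0..<q]) (length ?T)"
    by (rule vpe_append[OF v1 vpe_append[OF v2 vpe_append[OF v3 vpe_append[OF v4 v5]]]])
  have "z_SSsr ?T \<le> length (runparse r @ runparse N @ [1] @ runparse N @ map (\<lambda>i. x (Suc i) + Suc i + 1) [0..<q])"
    by (rule z_ub[OF v])
  also have "\<dots> \<le> q + 7" using len_runparse[of r] len_runparse[of N] by simp
  finally show ?thesis .
qed

lemma TT_ne: "1 \<le> N \<Longrightarrow> TT r N mid x q \<noteq> []"
  using TT_last by blast

lemma z_three:
  assumes N1: "1 \<le> N" and m2: "2 \<notin> set mid" and m0: "0 \<notin> set mid"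
    and hb: "\<And>k. 1 \<le> k \<Longrightarrow> \<not> sublist (replicate k 1 @ [0]) (base r N mid)"
    and big: "\<And>i. x i < x (Suc i) - x i"
  shows "3 * q + 1 \<le> z_SSsr (TT r N mid x q)"
  using z_lb[OF TT_ne[OF N1] chain3[OF xmono x0 N1 m2 m0 hb big le_refl]] len_ws3 by simp

lemma z_two:
  assumes N1: "1 \<le> N" and m1: "1 \<notin> set mid"
    and hb: "\<And>k. 1 \<le> k \<Longrightarrow> \<not> sublist (replicate k 1 @ [0]) (base r N mid)"
    and H2: "\<And>k. suffix (0 # replicate k 2) (base r N mid) \<Longrightarrow> k = N"
    and qN: "q < N" and q1: "1 \<le> q"
  shows "2 * q \<le> z_SSsr (TT r N mid x q)"
proof -
  obtain p where p: "q = Suc p" using q1 by (cases q) auto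
  have "length (ws2 r N mid x q) + 1 \<le> z_SSsr (TT r N mid x q)"
    by (rule z_lb[OF TT_ne[OF N1] chain2[OF xmono x0 N1 m1 hb H2 qN le_refl]])
  then show ?thesis using len_ws2[of r N mid x p] p by simp
qed

lemma z_one:
  assumes N1: "1 \<le> N" and m1: "1 \<notin> set mid"
    and H2: "\<And>k. suffix (0 # replicate k 2) (base r N mid) \<Longrightarrow> k = N"
    and qN: "q < N"
  shows "q \<le> z_SSsr (TT r N mid x q)"
proof (cases q)
  case 0 then show ?thesis by simp
next
  case (Suc p)
  have sp: "Suc p \<le> q" using Suc by simp
  have "length (wsR r N mid x p) + 1 \<le> z_SSsr (TT r N mid x q)"
    by (rule z_lb[OF TT_ne[OF N1] chainR[OF xmono x0 m1 H2 qN sp]])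
  then show ?thesis using len_wsR[of r N mid x p] Suc by simp
qed

end

lemma TT_split: "TT r N mid x q = (replicate r 3 @ replicate N 1) @ mid @ (replicate N 2 @ QQ x q)"
  by (simp add: TT_def base_def)

lemma ed_TT_sub: "ed (TT r N [0] x q) (TT r N [9] x q) = 1"
proof -
  have "ed (TT r N [0] x q) (TT r N [9] x q) \<le> 1"
    using ed_sub1[of "replicate r 3 @ replicate N 1" 0 "replicate N 2 @ QQ x q" 9] by (simp add: TT_split)
  moreover have "TT r N [0] x q \<noteq> TT r N [9] x q" unfolding TT_split by simp
  ultimately show ?thesis by (rule ed_one)
qed

lemma ed_TT_del: "ed (TT r N [0] x q) (TT r N [] x q) = 1"
proof -
  have "ed (TT r N [0] x q) (TT r N [] x q) \<le> 1"
    using ed_del1[of "replicate r 3 @ replicate N 1" 0 "replicate N 2 @ QQ x q"] by (simp add: TT_split)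
  moreover have "TT r N [0] x q \<noteq> TT r N [] x q"
    using len_TT[of r N "[0]" x q] len_TT[of r N "[]" x q] by fastforce
  ultimately show ?thesis by (rule ed_one)
qed

lemma ed_TT_ins: "ed (TT r N [0] x q) (TT r N [9,0] x q) = 1"
proof -
  have "ed (TT r N [0] x q) (TT r N [9,0] x q) \<le> 1"
    using ed_ins1[of "replicate r 3 @ replicate N 1" "0 # replicate N 2 @ QQ x q" 9] by (simp add: TT_split)
  moreover have "TT r N [0] x q \<noteq> TT r N [9,0] x q"
    using len_TT[of r N "[0]" x q] len_TT[of r N "[9,0]" x q] by fastforce
  ultimately show ?thesis by (rule ed_one)
qed

definition xe :: "nat \<Rightarrow> nat" where "xe i = 3 ^ i - 1"

lemma xe0: "xe 0 = 0" by (simp add: xe_def)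

lemma xe_mono: "xe i < xe (Suc i)"
proof -
  have "1 \<le> (3::nat) ^ i" by simp
  then show ?thesis unfolding xe_def power_Suc by arith
qed

lemma xe_big: "xe i < xe (Suc i) - xe i"
proof -
  have "1 \<le> (3::nat) ^ i" by simp
  then show ?thesis unfolding xe_def power_Suc by arith
qed

lemma q_lt_3pow: "q < (3::nat) ^ q"
proof -
  have "q < 2 ^ q" by (rule less_exp)
  also have "(2::nat) ^ q \<le> 3 ^ q" by (rule power_mono) simp_all
  finally show ?thesis .
qed

lemma xe_le: "xe q \<le> 3 ^ q" by (simp add: xe_def)

lemma id_mono: "(\<lambda>i::nat. i) i < (\<lambda>i. i) (Suc i)" by simp

lemma len_QQ_id: "length (QQ (\<lambda>i. i) q) = q * q + 2 * q"
  by (induction q) (auto simp: blk_def)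

lemma famE:
  assumes Q1: "1 \<le> Q"
  shows "3 * Q + 1 \<le> z_SSsr (TT r (3 ^ Q) [9] xe Q)"
    "3 * Q + 1 \<le> z_SSsr (TT r (3 ^ Q) [] xe Q)"
    "z_SSsr (TT r (3 ^ Q) [0] xe Q) \<le> Q + 7"
    "Q \<le> z_SSsr (TT r (3 ^ Q) [0] xe Q)"
proof -
  have N1: "1 \<le> (3::nat) ^ Q" by simp
  show "3 * Q + 1 \<le> z_SSsr (TT r (3 ^ Q) [9] xe Q)"
    by (rule z_three[OF xe_mono xe0 N1]) (use base_L_nozero xe_big in auto)
  show "3 * Q + 1 \<le> z_SSsr (TT r (3 ^ Q) [] xe Q)"
    by (rule z_three[OF xe_mono xe0 N1]) (use base_L_nozero xe_big in auto)
  show "z_SSsr (TT r (3 ^ Q) [0] xe Q) \<le> Q + 7"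
    by (rule z_T0_ub[OF xe_mono xe0 xe_le less_imp_le[OF q_lt_3pow]])
  show "Q \<le> z_SSsr (TT r (3 ^ Q) [0] xe Q)"
    by (rule z_one[OF xe_mono xe0 N1 _ _ q_lt_3pow]) (use base_H2_0 in auto)
qed

lemma famL:
  assumes Q1: "1 \<le> Q"
  shows "2 * Q \<le> z_SSsr (TT r (Q + 1) [9] (\<lambda>i. i) Q)"
    "2 * Q \<le> z_SSsr (TT r (Q + 1) [] (\<lambda>i. i) Q)"
    "2 * Q \<le> z_SSsr (TT r (Q + 1) [9,0] (\<lambda>i. i) Q)"
    "z_SSsr (TT r (Q + 1) [0] (\<lambda>i. i) Q) \<le> Q + 7"
    "Q \<le> z_SSsr (TT r (Q + 1) [0] (\<lambda>i. i) Q)"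
proof -
  have N1: "1 \<le> Q + 1" by simp
  have qN: "Q < Q + 1" by simp
  have m: "(\<lambda>i::nat. i) i < (\<lambda>i. i) (Suc i)" for i by simp
  have m0: "(\<lambda>i::nat. i) 0 = 0" by simp
  show "2 * Q \<le> z_SSsr (TT r (Q + 1) [9] (\<lambda>i. i) Q)"
    by (rule z_two[OF m m0 N1 _ _ _ qN Q1]) (use base_L_nozero[of "[9]"] base_H2_nz[of "[9]"] in auto)
  show "2 * Q \<le> z_SSsr (TT r (Q + 1) [] (\<lambda>i. i) Q)"
    by (rule z_two[OF m m0 N1 _ _ _ qN Q1]) (use base_L_nozero[of "[]"] base_H2_nz[of "[]"] in auto)
  show "2 * Q \<le> z_SSsr (TT r (Q + 1) [9,0] (\<lambda>i. i) Q)"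
    by (rule z_two[OF m m0 N1 _ _ _ qN Q1]) (use base_L_90 base_H2_90 in auto)
  show "z_SSsr (TT r (Q + 1) [0] (\<lambda>i. i) Q) \<le> Q + 7"
    by (rule z_T0_ub[OF m m0]) simp_all
  show "Q \<le> z_SSsr (TT r (Q + 1) [0] (\<lambda>i. i) Q)"
    by (rule z_one[OF m m0 N1 _ _ qN]) (use base_H2_0 in auto)
qed

lemma ratio_le: "real a / real b \<le> real a"
proof (cases "b = 0")
  case True then show ?thesis by simp
next
  case False
  then have "1 \<le> real b" by simp
  then have "real a / real b \<le> real a / 1" by (intro divide_left_mono) simp_all
  then show ?thesis by simp
qed

lemma MS_sub_ge:
  fixes T T' :: "nat list"
  assumes "length T = n" "length T' = n" "ed T T' = 1"
  shows "real (z_SSsr T') / real (z_SSsr T) \<le> MS_sub (z_SSsr :: nat list \<Rightarrow> nat) n"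
  unfolding MS_sub_def
  apply (rule cSup_upper)
  using assms apply blast
  apply (rule bdd_aboveI[where M = "real n"])
proof -
  fix v assume "v \<in> {u. \<exists>(A::nat list) B. u = real (z_SSsr B) / real (z_SSsr A) \<and> length A = n \<and> length B = n \<and> ed A B = 1}"
  then obtain A B :: "nat list" where v: "v = real (z_SSsr B) / real (z_SSsr A)" "length B = n" by blast
  have "v \<le> real (z_SSsr B)" using v ratio_le by simp
  also have "\<dots> \<le> real n" using z_le_length[of B] v(2) by (simp only: of_nat_le_iff of_nat_add of_nat_1)
  finally show "v \<le> real n" .
qed

lemma MS_ins_ge:
  fixes T T' :: "nat list"
  assumes "length T = n" "length T' = n + 1" "ed T T' = 1"
  shows "real (z_SSsr T') / real (z_SSsr T) \<le> MS_ins (z_SSsr :: nat list \<Rightarrow> nat) n"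
  unfolding MS_ins_def
  apply (rule cSup_upper)
  using assms apply blast
  apply (rule bdd_aboveI[where M = "real (n + 1)"])
proof -
  fix v assume "v \<in> {u. \<exists>(A::nat list) B. u = real (z_SSsr B) / real (z_SSsr A) \<and> length A = n \<and> length B = n + 1 \<and> ed A B = 1}"
  then obtain A B :: "nat list" where v: "v = real (z_SSsr B) / real (z_SSsr A)" "length B = n + 1" by blast
  have "v \<le> real (z_SSsr B)" using v ratio_le by simp
  also have "\<dots> \<le> real (n + 1)" using z_le_length[of B] v(2) by (simp only: of_nat_le_iff of_nat_add of_nat_1)
  finally show "v \<le> real (n + 1)" .
qed

lemma MS_del_ge:
  fixes T T' :: "nat list"
  assumes "length T = n" "length T' + 1 = n" "ed T T' = 1"
  shows "real (z_SSsr T') / real (z_SSsr T) \<le> MS_del (z_SSsr :: nat list \<Rightarrow> nat) n"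
  unfolding MS_del_def
  apply (rule cSup_upper)
  using assms apply blast
  apply (rule bdd_aboveI[where M = "real n"])
proof -
  fix v assume "v \<in> {u. \<exists>(A::nat list) B. u = real (z_SSsr B) / real (z_SSsr A) \<and> length A = n \<and> length B + 1 = n \<and> ed A B = 1}"
  then obtain A B :: "nat list" where v: "v = real (z_SSsr B) / real (z_SSsr A)" "length B + 1 = n" by blast
  have "v \<le> real (z_SSsr B)" using v ratio_le by simp
  also have "\<dots> \<le> real n" using z_le_length[of B] v(2) by (simp only: of_nat_le_iff of_nat_add of_nat_1)
  finally show "v \<le> real n" .
qed

lemma AS_sub_ge:
  fixes T T' :: "nat list"
  assumes "length T = n" "length T' = n" "ed T T' = 1"
  shows "real (z_SSsr T') - real (z_SSsr T) \<le> AS_sub (z_SSsr :: nat list \<Rightarrow> nat) n"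
  unfolding AS_sub_def
  apply (rule cSup_upper)
  using assms apply blast
  apply (rule bdd_aboveI[where M = "real n"])
proof -
  fix v assume "v \<in> {u. \<exists>(A::nat list) B. u = real (z_SSsr B) - real (z_SSsr A) \<and> length A = n \<and> length B = n \<and> ed A B = 1}"
  then obtain A B :: "nat list" where v: "v = real (z_SSsr B) - real (z_SSsr A)" "length B = n" by blast
  have "v \<le> real (z_SSsr B)" using v  by simp
  also have "\<dots> \<le> real n" using z_le_length[of B] v(2) by (simp only: of_nat_le_iff of_nat_add of_nat_1)
  finally show "v \<le> real n" .
qed

lemma AS_ins_ge:
  fixes T T' :: "nat list"
  assumes "length T = n" "length T' = n + 1" "ed T T' = 1"
  shows "real (z_SSsr T') - real (z_SSsr T) \<le> AS_ins (z_SSsr :: nat list \<Rightarrow> nat) n"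
  unfolding AS_ins_def
  apply (rule cSup_upper)
  using assms apply blast
  apply (rule bdd_aboveI[where M = "real (n + 1)"])
proof -
  fix v assume "v \<in> {u. \<exists>(A::nat list) B. u = real (z_SSsr B) - real (z_SSsr A) \<and> length A = n \<and> length B = n + 1 \<and> ed A B = 1}"
  then obtain A B :: "nat list" where v: "v = real (z_SSsr B) - real (z_SSsr A)" "length B = n + 1" by blast
  have "v \<le> real (z_SSsr B)" using v  by simp
  also have "\<dots> \<le> real (n + 1)" using z_le_length[of B] v(2) by (simp only: of_nat_le_iff of_nat_add of_nat_1)
  finally show "v \<le> real (n + 1)" .
qed

lemma AS_del_ge:
  fixes T T' :: "nat list"
  assumes "length T = n" "length T' + 1 = n" "ed T T' = 1"
  shows "real (z_SSsr T') - real (z_SSsr T) \<le> AS_del (z_SSsr :: nat list \<Rightarrow> nat) n"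
  unfolding AS_del_def
  apply (rule cSup_upper)
  using assms apply blast
  apply (rule bdd_aboveI[where M = "real n"])
proof -
  fix v assume "v \<in> {u. \<exists>(A::nat list) B. u = real (z_SSsr B) - real (z_SSsr A) \<and> length A = n \<and> length B + 1 = n \<and> ed A B = 1}"
  then obtain A B :: "nat list" where v: "v = real (z_SSsr B) - real (z_SSsr A)" "length B + 1 = n" by blast
  have "v \<le> real (z_SSsr B)" using v  by simp
  also have "\<dots> \<le> real n" using z_le_length[of B] v(2) by (simp only: of_nat_le_iff of_nat_add of_nat_1)
  finally show "v \<le> real n" .
qed

lemma liminf_lb:
  fixes f :: "nat \<Rightarrow> real" and c K :: real
  assumes K: "0 \<le> K"
    and H: "\<And>Q. 1 \<le> Q \<Longrightarrow> \<exists>n0. \<forall>n\<ge>n0. c - K / (real Q + 7) \<le> f n"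
  shows "ereal c \<le> liminf (\<lambda>n. ereal (f n))"
  unfolding le_Liminf_iff
proof (intro allI impI)
  fix y :: ereal assume y: "y < ereal c"
  show "\<forall>\<^sub>F n in sequentially. y < ereal (f n)"
  proof (cases y)
    case (real y')
    then have yc: "y' < c" using y by simp
    define Q where "Q = nat \<lceil>K / (c - y')\<rceil> + 1"
    have Q1: "1 \<le> Q" by (simp add: Q_def)
    have "K / (c - y') \<le> real (nat \<lceil>K / (c - y')\<rceil>)" by linarith
    then have QK: "K / (c - y') < real Q + 7" by (simp add: Q_def)
    have pos: "0 < real Q + 7" by simp
    have "K < (c - y') * (real Q + 7)"
      using QK yc by (simp add: divide_less_eq mult.commute)
    then have "K / (real Q + 7) < c - y'" using pos by (simp add: divide_less_eq)
    then have lt: "y' < c - K / (real Q + 7)" by simp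
    obtain n0 where n0: "\<forall>n\<ge>n0. c - K / (real Q + 7) \<le> f n" using H[OF Q1] by blast
    show ?thesis
    proof (rule eventually_sequentiallyI[of n0])
      fix n assume "n0 \<le> n"
      then have "c - K / (real Q + 7) \<le> f n" using n0 by simp
      then show "y < ereal (f n)" using lt real by simp
    qed
  next
    case PInf then show ?thesis using y by simp
  next
    case MInf then show ?thesis by simp
  qed
qed

lemma omega_lb:
  fixes g :: "nat \<Rightarrow> real"
  assumes H: "\<And>n q. 1 \<le> q \<Longrightarrow> q * q + 4 * q + 3 \<le> n \<Longrightarrow> real q - 7 \<le> g n"
  shows "g \<in> \<Omega>(\<lambda>n. sqrt (real n))"
proof (rule landau_omega.bigI[where c = "1/4"])
  show "(0::real) < 1/4" by simp
  show "\<forall>\<^sub>F n in sequentially. 1 / 4 * norm (sqrt (real n)) \<le> norm (g n)"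
  proof (rule eventually_sequentiallyI[of 400])
    fix n :: nat assume n: "400 \<le> n"
    define s where "s = nat \<lfloor>sqrt (real n)\<rfloor>"
    have sq20: "20 \<le> sqrt (real n)"
      by (rule real_le_rsqrt) (use n in simp)
    have s_le: "real s \<le> sqrt (real n)" using sq20 by (simp add: s_def)
    have s_gt: "sqrt (real n) < real s + 1" using sq20 by (simp add: s_def)
    have s20: "20 \<le> s" using sq20 s_gt by linarith
    have "real (s * s) \<le> real n"
    proof -
      have "real s * real s \<le> sqrt (real n) * sqrt (real n)"
        using s_le by (intro mult_mono) simp_all
      then show ?thesis by simp
    qed
    then have ssn: "s * s \<le> n" by (simp only: of_nat_le_iff)
    define q where "q = s - 3"
    have q1: "1 \<le> q" using s20 by (simp add: q_def)
    have qs: "q + 3 = s" using s20 by (simp add: q_def)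
    have e1: "s * s = (q + 3) * (q + 3)" using qs by simp
    have e2: "(q + 3) * (q + 3) = q * q + 6 * q + 9" by (simp add: algebra_simps)
    have L: "q * q + 4 * q + 3 \<le> n" using ssn e1 e2 by linarith
    have gq: "real q - 7 \<le> g n" by (rule H[OF q1 L])
    have "real q = real s - 3" using qs by linarith
    then have "sqrt (real n) - 11 \<le> g n" using gq s_gt by linarith
    then show "1 / 4 * norm (sqrt (real n)) \<le> norm (g n)" using sq20 by simp
  qed
qed

lemma ratio_lb:
  fixes a b z z' :: nat
  assumes "a \<le> z'" "z \<le> b" "1 \<le> z"
  shows "real a / real b \<le> real z' / real z"
  by (rule frac_le) (use assms in simp_all)

abbreviation zz :: "nat list \<Rightarrow> nat" where "zz \<equiv> z_SSsr"

lemma MSsub_constr: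
  assumes Q1: "1 \<le> Q" and n: "2 * 3 ^ Q + 1 + length (QQ xe Q) \<le> n"
  shows "3 - 20 / (real Q + 7) \<le> MS_sub zz n"
proof -
  define r where "r = n - (2 * 3 ^ Q + 1 + length (QQ xe Q))"
  let ?T = "TT r (3 ^ Q) [0] xe Q"
  let ?T' = "TT r (3 ^ Q) [9] xe Q"
  have l1: "length ?T = n" using n by (simp add: len_TT r_def)
  have l2: "length ?T' = n" using n by (simp add: len_TT r_def)
  have "real (3 * Q + 1) / real (Q + 7) \<le> real (zz ?T') / real (zz ?T)"
    by (rule ratio_lb[OF famE(1)[OF Q1] famE(3)[OF Q1]]) (use famE(4)[OF Q1, of r] Q1 in linarith)
  also have "\<dots> \<le> MS_sub zz n" by (rule MS_sub_ge[OF l1 l2 ed_TT_sub])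
  finally have h: "real (3 * Q + 1) / real (Q + 7) \<le> MS_sub zz n" .
  have "3 - 20 / (real Q + 7) = real (3 * Q + 1) / real (Q + 7)" by (simp add: field_simps)
  then show ?thesis using h by simp
qed

lemma MSdel_constr:
  assumes Q1: "1 \<le> Q" and n: "2 * 3 ^ Q + 1 + length (QQ xe Q) \<le> n"
  shows "3 - 20 / (real Q + 7) \<le> MS_del zz n"
proof -
  define r where "r = n - (2 * 3 ^ Q + 1 + length (QQ xe Q))"
  let ?T = "TT r (3 ^ Q) [0] xe Q"
  let ?T' = "TT r (3 ^ Q) [] xe Q"
  have l1: "length ?T = n" using n by (simp add: len_TT r_def)
  have l2: "length ?T' + 1 = n" using n by (simp add: len_TT r_def)
  have "real (3 * Q + 1) / real (Q + 7) \<le> real (zz ?T') / real (zz ?T)"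
    by (rule ratio_lb[OF famE(2)[OF Q1] famE(3)[OF Q1]]) (use famE(4)[OF Q1, of r] Q1 in linarith)
  also have "\<dots> \<le> MS_del zz n" by (rule MS_del_ge[OF l1 l2 ed_TT_del])
  finally have h: "real (3 * Q + 1) / real (Q + 7) \<le> MS_del zz n" .
  have "3 - 20 / (real Q + 7) = real (3 * Q + 1) / real (Q + 7)" by (simp add: field_simps)
  then show ?thesis using h by simp
qed

lemma MSins_constr:
  assumes Q1: "1 \<le> Q" and n: "Q * Q + 4 * Q + 3 \<le> n"
  shows "2 - 14 / (real Q + 7) \<le> MS_ins zz n"
proof -
  define r where "r = n - (Q * Q + 4 * Q + 3)"
  let ?T = "TT r (Q + 1) [0] (\<lambda>i. i) Q"
  let ?T' = "TT r (Q + 1) [9,0] (\<lambda>i. i) Q"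
  have l1: "length ?T = n" using n by (simp add: len_TT r_def len_QQ_id)
  have l2: "length ?T' = n + 1" using n by (simp add: len_TT r_def len_QQ_id)
  have "real (2 * Q) / real (Q + 7) \<le> real (zz ?T') / real (zz ?T)"
    by (rule ratio_lb[OF famL(3)[OF Q1] famL(4)[OF Q1]]) (use famL(5)[OF Q1, of r] Q1 in linarith)
  also have "\<dots> \<le> MS_ins zz n" by (rule MS_ins_ge[OF l1 l2 ed_TT_ins])
  finally have h: "real (2 * Q) / real (Q + 7) \<le> MS_ins zz n" .
  have "2 - 14 / (real Q + 7) = real (2 * Q) / real (Q + 7)" by (simp add: field_simps)
  then show ?thesis using h by simp
qed

lemma ASsub_lin:
  assumes q1: "1 \<le> q" and n: "q * q + 4 * q + 3 \<le> n"
  shows "real q - 7 \<le> AS_sub zz n"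
proof -
  define r where "r = n - (q * q + 4 * q + 3)"
  let ?T = "TT r (q + 1) [0] (\<lambda>i. i) q"
  let ?T' = "TT r (q + 1) [9] (\<lambda>i. i) q"
  have l1: "length ?T = n" using n by (simp add: len_TT r_def len_QQ_id)
  have l2: "length ?T' = n" using n by (simp add: len_TT r_def len_QQ_id)
  have "real q - 7 \<le> real (zz ?T') - real (zz ?T)"
    using famL(1)[OF q1, of r] famL(4)[OF q1, of r] by linarith
  also have "\<dots> \<le> AS_sub zz n" by (rule AS_sub_ge[OF l1 l2 ed_TT_sub])
  finally show ?thesis .
qed

lemma ASdel_lin:
  assumes q1: "1 \<le> q" and n: "q * q + 4 * q + 3 \<le> n"
  shows "real q - 7 \<le> AS_del zz n"
proof -
  define r where "r = n - (q * q + 4 * q + 3)"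
  let ?T = "TT r (q + 1) [0] (\<lambda>i. i) q"
  let ?T' = "TT r (q + 1) [] (\<lambda>i. i) q"
  have l1: "length ?T = n" using n by (simp add: len_TT r_def len_QQ_id)
  have l2: "length ?T' + 1 = n" using n by (simp add: len_TT r_def len_QQ_id)
  have "real q - 7 \<le> real (zz ?T') - real (zz ?T)"
    using famL(2)[OF q1, of r] famL(4)[OF q1, of r] by linarith
  also have "\<dots> \<le> AS_del zz n" by (rule AS_del_ge[OF l1 l2 ed_TT_del])
  finally show ?thesis .
qed

lemma ASins_lin:
  assumes q1: "1 \<le> q" and n: "q * q + 4 * q + 3 \<le> n"
  shows "real q - 7 \<le> AS_ins zz n"
proof -
  define r where "r = n - (q * q + 4 * q + 3)"
  let ?T = "TT r (q + 1) [0] (\<lambda>i. i) q"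
  let ?T' = "TT r (q + 1) [9,0] (\<lambda>i. i) q"
  have l1: "length ?T = n" using n by (simp add: len_TT r_def len_QQ_id)
  have l2: "length ?T' = n + 1" using n by (simp add: len_TT r_def len_QQ_id)
  have "real q - 7 \<le> real (zz ?T') - real (zz ?T)"
    using famL(3)[OF q1, of r] famL(4)[OF q1, of r] by linarith
  also have "\<dots> \<le> AS_ins zz n" by (rule AS_ins_ge[OF l1 l2 ed_TT_ins])
  finally show ?thesis .
qed

lemma sqrt_bound:
  fixes t :: nat and c :: real
  assumes "1 \<le> t" "c \<le> 20"
  shows "c \<le> 20 * sqrt (real t)"
proof -
  have "1 \<le> sqrt (real t)" using assms(1) by simp
  then show ?thesis using assms(2) by linarith
qed

lemma part2_sub:
  "\<exists>T T'. zz T \<ge> m \<and> length T' = length T \<and> ed T T' = 1 \<and>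
     real (zz T') - real (zz T) \<ge> 2 * real (zz T) - 20 * sqrt (real (zz T))"
proof -
  define Q where "Q = max m 1"
  have Q1: "1 \<le> Q" by (simp add: Q_def)
  let ?T = "TT 0 (3 ^ Q) [0] xe Q"
  let ?T' = "TT 0 (3 ^ Q) [9] xe Q"
  have a: "3 * Q + 1 \<le> zz ?T'" by (rule famE(1)[OF Q1])
  have b: "zz ?T \<le> Q + 7" by (rule famE(3)[OF Q1])
  have c: "Q \<le> zz ?T" by (rule famE(4)[OF Q1])
  have "3 * real (zz ?T) - real (zz ?T') \<le> 20 * sqrt (real (zz ?T))"
    by (rule sqrt_bound) (use a b c Q1 in linarith)+
  moreover have "m \<le> zz ?T" using c by (simp add: Q_def)
  moreover have "length ?T' = length ?T" by (simp add: len_TT)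
  ultimately show ?thesis using ed_TT_sub[of 0 "3 ^ Q" xe Q]
    by (intro exI[of _ ?T] exI[of _ ?T']) simp
qed

lemma part2_del:
  "\<exists>T T'. zz T \<ge> m \<and> length T' + 1 = length T \<and> ed T T' = 1 \<and>
     real (zz T') - real (zz T) \<ge> 2 * real (zz T) - 20 * sqrt (real (zz T))"
proof -
  define Q where "Q = max m 1"
  have Q1: "1 \<le> Q" by (simp add: Q_def)
  let ?T = "TT 0 (3 ^ Q) [0] xe Q"
  let ?T' = "TT 0 (3 ^ Q) [] xe Q"
  have a: "3 * Q + 1 \<le> zz ?T'" by (rule famE(2)[OF Q1])
  have b: "zz ?T \<le> Q + 7" by (rule famE(3)[OF Q1])
  have c: "Q \<le> zz ?T" by (rule famE(4)[OF Q1])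
  have "3 * real (zz ?T) - real (zz ?T') \<le> 20 * sqrt (real (zz ?T))"
    by (rule sqrt_bound) (use a b c Q1 in linarith)+
  moreover have "m \<le> zz ?T" using c by (simp add: Q_def)
  moreover have "length ?T' + 1 = length ?T" by (simp add: len_TT)
  ultimately show ?thesis using ed_TT_del[of 0 "3 ^ Q" xe Q]
    by (intro exI[of _ ?T] exI[of _ ?T']) simp
qed

lemma part2_ins:
  "\<exists>T T'. zz T \<ge> m \<and> length T' = length T + 1 \<and> ed T T' = 1 \<and>
     real (zz T') - real (zz T) \<ge> real (zz T) - 20 * sqrt (real (zz T))"
proof -
  define Q where "Q = max m 1"
  have Q1: "1 \<le> Q" by (simp add: Q_def)
  let ?T = "TT 0 (Q + 1) [0] (\<lambda>i. i) Q"
  let ?T' = "TT 0 (Q + 1) [9,0] (\<lambda>i. i) Q"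
  have a: "2 * Q \<le> zz ?T'" by (rule famL(3)[OF Q1])
  have b: "zz ?T \<le> Q + 7" by (rule famL(4)[OF Q1])
  have c: "Q \<le> zz ?T" by (rule famL(5)[OF Q1])
  have "2 * real (zz ?T) - real (zz ?T') \<le> 20 * sqrt (real (zz ?T))"
    by (rule sqrt_bound) (use a b c Q1 in linarith)+
  moreover have "m \<le> zz ?T" using c by (simp add: Q_def)
  moreover have "length ?T' = length ?T + 1" by (simp add: len_TT)
  ultimately show ?thesis using ed_TT_ins[of 0 "Q + 1" "\<lambda>i. i" Q]
    by (intro exI[of _ ?T] exI[of _ ?T']) simp
qed

lemma theta20: "(\<lambda>x::nat. 20 * sqrt (real x)) \<in> \<Theta>(\<lambda>x. sqrt (real x))"
  by simp

theorem mainTheorem14: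
  fixes z :: "nat list \<Rightarrow> nat"
  defines "z \<equiv> z_SSsr"
  shows
    \<comment> \<open>substitutions\<close>
    "liminf (\<lambda>n. ereal (MS_sub z n)) \<ge> 3
     \<and> (\<exists>f :: nat \<Rightarrow> real. f \<in> \<Theta>(\<lambda>x. sqrt (real x)) \<and>
          (\<forall>m. \<exists>T T'. z T \<ge> m \<and> length T' = length T \<and> ed T T' = 1 \<and>
               real (z T') - real (z T) \<ge> 2 * real (z T) - f (z T)))
     \<and> (\<lambda>n. AS_sub z n) \<in> \<Omega>(\<lambda>n. sqrt (real n))
     \<and> \<comment> \<open>insertions\<close>
       liminf (\<lambda>n. ereal (MS_ins z n)) \<ge> 2
     \<and> (\<exists>f :: nat \<Rightarrow> real. f \<in> \<Theta>(\<lambda>x. sqrt (real x)) \<and>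
          (\<forall>m. \<exists>T T'. z T \<ge> m \<and> length T' = length T + 1 \<and> ed T T' = 1 \<and>
               real (z T') - real (z T) \<ge> real (z T) - f (z T)))
     \<and> (\<lambda>n. AS_ins z n) \<in> \<Omega>(\<lambda>n. sqrt (real n))
     \<and> \<comment> \<open>deletions\<close>
       liminf (\<lambda>n. ereal (MS_del z n)) \<ge> 3
     \<and> (\<exists>f :: nat \<Rightarrow> real. f \<in> \<Theta>(\<lambda>x. sqrt (real x)) \<and>
          (\<forall>m. \<exists>T T'. z T \<ge> m \<and> length T' + 1 = length T \<and> ed T T' = 1 \<and>
               real (z T') - real (z T) \<ge> 2 * real (z T) - f (z T)))
     \<and> (\<lambda>n. AS_del z n) \<in> \<Omega>(\<lambda>n. sqrt (real n))"
proof -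
  have L1: "ereal 3 \<le> liminf (\<lambda>n. ereal (MS_sub zz n))"
  proof (rule liminf_lb[where K = 20])
    fix Q :: nat assume Q1: "1 \<le> Q"
    show "\<exists>n0. \<forall>n\<ge>n0. 3 - 20 / (real Q + 7) \<le> MS_sub zz n"
      using MSsub_constr[OF Q1] by blast
  qed simp
  have L2: "ereal 2 \<le> liminf (\<lambda>n. ereal (MS_ins zz n))"
  proof (rule liminf_lb[where K = 14])
    fix Q :: nat assume Q1: "1 \<le> Q"
    show "\<exists>n0. \<forall>n\<ge>n0. 2 - 14 / (real Q + 7) \<le> MS_ins zz n"
      using MSins_constr[OF Q1] by blast
  qed simp
  have L3: "ereal 3 \<le> liminf (\<lambda>n. ereal (MS_del zz n))"
  proof (rule liminf_lb[where K = 20])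
    fix Q :: nat assume Q1: "1 \<le> Q"
    show "\<exists>n0. \<forall>n\<ge>n0. 3 - 20 / (real Q + 7) \<le> MS_del zz n"
      using MSdel_constr[OF Q1] by blast
  qed simp
  have O1: "(\<lambda>n. AS_sub zz n) \<in> \<Omega>(\<lambda>n. sqrt (real n))"
    by (rule omega_lb) (rule ASsub_lin)
  have O2: "(\<lambda>n. AS_ins zz n) \<in> \<Omega>(\<lambda>n. sqrt (real n))"
    by (rule omega_lb) (rule ASins_lin)
  have O3: "(\<lambda>n. AS_del zz n) \<in> \<Omega>(\<lambda>n. sqrt (real n))"
    by (rule omega_lb) (rule ASdel_lin)
  have P1: "\<exists>f :: nat \<Rightarrow> real. f \<in> \<Theta>(\<lambda>x. sqrt (real x)) \<and>
          (\<forall>m. \<exists>T T'. zz T \<ge> m \<and> length T' = length T \<and> ed T T' = 1 \<and>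
               real (zz T') - real (zz T) \<ge> 2 * real (zz T) - f (zz T))"
    using theta20 part2_sub by blast
  have P2: "\<exists>f :: nat \<Rightarrow> real. f \<in> \<Theta>(\<lambda>x. sqrt (real x)) \<and>
          (\<forall>m. \<exists>T T'. zz T \<ge> m \<and> length T' = length T + 1 \<and> ed T T' = 1 \<and>
               real (zz T') - real (zz T) \<ge> real (zz T) - f (zz T))"
    using theta20 part2_ins by blast
  have P3: "\<exists>f :: nat \<Rightarrow> real. f \<in> \<Theta>(\<lambda>x. sqrt (real x)) \<and>
          (\<forall>m. \<exists>T T'. zz T \<ge> m \<and> length T' + 1 = length T \<and> ed T T' = 1 \<and>
               real (zz T') - real (zz T) \<ge> 2 * real (zz T) - f (zz T))"
    using theta20 part2_del by blast
  show ?thesis unfolding z_def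
    using L1 L2 L3 O1 O2 O3 P1 P2 P3 by simp
qed

end
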